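(* Let $p(x,y)$ be a real polynomial with $p(0,0)=0$, $\nabla p(0,0)=(0,0)$, $\dim\operatorname{Co}N_p=2$, such that for every $A\in\mathbb{N}^2$ the main $A$-quasi-homogeneous form of $p$ is nonnegative on $\mathbb{R}^2$. Suppose $\mathcal{A}_p\neq\emptyset$ and that for every $A\in\mathcal{A}_p$ at least one of the conditions $(C2)_A$, $(\tilde C2)_A$ holds. Then $(0,0)$ is a point of local minimum of $p$.
   Context: $\mathbb{N}=\{1,2,\dots\}$; $\mathbb{N}_0^2$ is the set of $(A_1,A_2)\in\mathbb{N}^2$ with $\gcd(A_1,A_2)=1$. $N_p$ is the support of $p$ and $\operatorname{Co}N_p$ its convex hull. For $A\in\mathbb{N}^2$ the main $A$-quasi-homogeneous form of $p$ is the sum of the terms of $p$ whose exponent vectors $k$ minimize $\langle A,k\rangle$ over $N_p$. For $A\in\mathbb{N}_0^2$, with $B_1^A<\dots<B_{r_A}^A$ the distinct values of $\langle A,k\rangle$ on $N_p$, $\varphi_i^A$ is the sum of terms of $p$ with $\langle A,k\rangle=B_i^A$ ($\varphi_i^A:=0$ for $i>r_A$). The characteristic polynomial of $\varphi_1^A=\sum_ia_ix^{\alpha_i}y^{\beta_i}$ ($a_i\ne0$, $\alpha_1>\alpha_2>\dots$) is $g_1^A(u)=\sum_ia_iu^{(\alpha_1-\alpha_i)/A_2}$. $\mathcal{A}_p$ is the set of $A\in\mathbb{N}_0^2$ such that $\varphi_1^A$ has at least three terms, $g_1^A\ge0$ on $\mathbb{R}$, and $g_1^A$ has a real root. $H_\varphi=\{(x,y):\varphi(x,y)=0\}$.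 Condition $(C2)_A$: for all $(x,y)\in H_{\varphi_1^A}$ with $x\ne0,y\ne0$, $\varphi_2^A(x,y)>0$. Condition $(\tilde C2)_A$: for all $(x,y)\in H_{\varphi_1^A}\cap H_{\varphi_2^A}$ with $x\neq0$, $y\neq0$, $\varphi_3^A(x,y)>0$, and $\varphi_2^A(x,y)\ge0$ for all $(x,y)\in\mathbb{R}^2$. Local minimum at $(0,0)$ means $p\ge p(0,0)$ near $(0,0)$. *)

theory Defs
  imports "HOL-Analysis.Analysis"
begin

text \<open>A real polynomial in two variables is represented by its coefficient function
  c :: nat \<times> nat \<Rightarrow> real, with finite support; the coefficient of x^a y^b is c (a,b).\<close>

definition is_bipoly :: "(nat \<times> nat \<Rightarrow> real) \<Rightarrow> bool" where
  "is_bipoly c \<longleftrightarrow> finite {k. c k \<noteq> 0}"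

definition supp2 :: "(nat \<times> nat \<Rightarrow> real) \<Rightarrow> (nat \<times> nat) set" where
  "supp2 c = {k. c k \<noteq> 0}"

definition peval :: "(nat \<times> nat \<Rightarrow> real) \<Rightarrow> real \<Rightarrow> real \<Rightarrow> real" where
  "peval c x y = (\<Sum>k\<in>supp2 c. c k * x ^ fst k * y ^ snd k)"

definition supp_real :: "(nat \<times> nat \<Rightarrow> real) \<Rightarrow> (real \<times> real) set" where
  "supp_real c = (\<lambda>k. (real (fst k), real (snd k))) ` supp2 c"

definition wdeg :: "nat \<times> nat \<Rightarrow> nat \<times> nat \<Rightarrow> nat" where
  "wdeg A k = fst A * fst k + snd A * snd k"

definition main_form :: "(nat \<times> nat \<Rightarrow> real) \<Rightarrow> nat \<times> nat \<Rightarrow> (nat \<times> nat \<Rightarrow> real)" where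
  "main_form c A = (\<lambda>k. if k \<in> supp2 c \<and> (\<forall>k'\<in>supp2 c. wdeg A k \<le> wdeg A k') then c k else 0)"

definition wvals :: "(nat \<times> nat \<Rightarrow> real) \<Rightarrow> nat \<times> nat \<Rightarrow> nat set" where
  "wvals c A = wdeg A ` supp2 c"

text \<open>\<phi>_i^A (i \<ge> 1); zero for i > r_A.\<close>
definition phi :: "(nat \<times> nat \<Rightarrow> real) \<Rightarrow> nat \<times> nat \<Rightarrow> nat \<Rightarrow> (nat \<times> nat \<Rightarrow> real)" where
  "phi c A i = (\<lambda>k. if 1 \<le> i \<and> i \<le> card (wvals c A) \<and> k \<in> supp2 c
                        \<and> wdeg A k = sorted_list_of_set (wvals c A) ! (i - 1)
                     then c k else 0)"

definition char_poly :: "(nat \<times> nat \<Rightarrow> real) \<Rightarrow> nat \<times> nat \<Rightarrow> real \<Rightarrow> real" where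
  "char_poly c A u =
     (let f = phi c A 1; \<alpha>1 = Max (fst ` supp2 f)
      in (\<Sum>k\<in>supp2 f. f k * u ^ ((\<alpha>1 - fst k) div snd A)))"

definition N0sq :: "(nat \<times> nat) set" where
  "N0sq = {A. fst A \<ge> 1 \<and> snd A \<ge> 1 \<and> coprime (fst A) (snd A)}"

definition calA :: "(nat \<times> nat \<Rightarrow> real) \<Rightarrow> (nat \<times> nat) set" where
  "calA c = {A \<in> N0sq. card (supp2 (phi c A 1)) \<ge> 3
                \<and> (\<forall>u. char_poly c A u \<ge> 0) \<and> (\<exists>u. char_poly c A u = 0)}"

definition C2 :: "(nat \<times> nat \<Rightarrow> real) \<Rightarrow> nat \<times> nat \<Rightarrow> bool" where
  "C2 c A \<longleftrightarrow> (\<forall>x y. peval (phi c A 1) x y = 0 \<and> x \<noteq> 0 \<and> y \<noteq> 0 \<longrightarrow> peval (phi c A 2) x y > 0)"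

definition C2tilde :: "(nat \<times> nat \<Rightarrow> real) \<Rightarrow> nat \<times> nat \<Rightarrow> bool" where
  "C2tilde c A \<longleftrightarrow>
     (\<forall>x y. peval (phi c A 1) x y = 0 \<and> peval (phi c A 2) x y = 0 \<and> x \<noteq> 0 \<and> y \<noteq> 0
              \<longrightarrow> peval (phi c A 3) x y > 0)
     \<and> (\<forall>x y. peval (phi c A 2) x y \<ge> 0)"

end

theory Submission
  imports Defs "HOL-Library.Infinite_Set"
begin

lemma freq_subseq:
  assumes "frequently P sequentially"
  shows "\<exists>r::nat\<Rightarrow>nat. strict_mono r \<and> (\<forall>n. P (r n))"
  using infinite_enumerate[of "{n. P n}"] assms
  by (simp add: frequently_cofinite[symmetric] cofinite_eq_sequentially)

lemma supp2_phi:
  assumes "1 \<le> i" "i \<le> card (wvals c A)"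
  shows "supp2 (phi c A i) = {k \<in> supp2 c. wdeg A k = sorted_list_of_set (wvals c A) ! (i - 1)}"
  using assms by (auto simp: supp2_def phi_def)

lemma supp2_phi_out:
  assumes "\<not> (1 \<le> i \<and> i \<le> card (wvals c A))"
  shows "phi c A i = (\<lambda>k. 0)"
  using assms by (auto simp: phi_def)

lemma peval_zero_fun: "peval (\<lambda>k. 0) x y = 0"
  by (simp add: peval_def supp2_def)

lemma peval_restrict:
  assumes "finite (supp2 c)"
  shows "peval (\<lambda>k. if k \<in> supp2 c \<and> P k then c k else 0) x y = (\<Sum>k\<in>{k\<in>supp2 c. P k}. c k * x ^ fst k * y ^ snd k)"
proof -
  have "supp2 (\<lambda>k. if k \<in> supp2 c \<and> P k then c k else 0) = {k\<in>supp2 c. P k}"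
    by (auto simp: supp2_def)
  then show ?thesis by (simp add: peval_def)
qed

lemma peval_phi:
  assumes "finite (supp2 c)" "1 \<le> i" "i \<le> card (wvals c A)"
  shows "peval (phi c A i) x y = (\<Sum>k\<in>{k\<in>supp2 c. wdeg A k = sorted_list_of_set (wvals c A) ! (i - 1)}. c k * x ^ fst k * y ^ snd k)"
proof -
  have "phi c A i = (\<lambda>k. if k \<in> supp2 c \<and> wdeg A k = sorted_list_of_set (wvals c A) ! (i - 1) then c k else 0)"
    using assms by (auto simp: phi_def)
  then show ?thesis using peval_restrict[OF assms(1)] by simp
qed

lemma phi1_main_form:
  assumes "finite (supp2 c)" "supp2 c \<noteq> {}"
  shows "phi c A 1 = main_form c A"
proof -
  let ?W = "wvals c A"
  have fW: "finite ?W" "?W \<noteq> {}" using assms by (auto simp: wvals_def)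
  then have cW: "card ?W \<ge> 1" by (simp add: Suc_leI card_gt_0_iff)
  have L0: "sorted_list_of_set ?W ! 0 = Min ?W"
    using sorted_list_of_set_nonempty[OF fW] by simp
  show ?thesis
  proof
    fix k
    show "phi c A 1 k = main_form c A k"
    proof (cases "k \<in> supp2 c")
      case True
      have "(wdeg A k = Min ?W) \<longleftrightarrow> (\<forall>k'\<in>supp2 c. wdeg A k \<le> wdeg A k')"
      proof
        assume "wdeg A k = Min ?W"
        then show "\<forall>k'\<in>supp2 c. wdeg A k \<le> wdeg A k'"
          using fW by (auto simp: wvals_def)
      next
        assume h: "\<forall>k'\<in>supp2 c. wdeg A k \<le> wdeg A k'"
        have "wdeg A k \<in> ?W" using True by (simp add: wvals_def)
        moreover have "\<forall>w\<in>?W. wdeg A k \<le> w" using h by (auto simp: wvals_def)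
        ultimately show "wdeg A k = Min ?W" using fW
          by (metis Min_eqI)
      qed
      then show ?thesis using True cW L0 by (simp add: phi_def main_form_def)
    next
      case False
      then show ?thesis by (simp add: phi_def main_form_def)
    qed
  qed
qed

lemma sorted_W_facts:
  fixes W :: "nat set"
  assumes "finite W"
  shows "sorted (sorted_list_of_set W)" "length (sorted_list_of_set W) = card W"
    "set (sorted_list_of_set W) = W" "distinct (sorted_list_of_set W)"
  using assms by auto

lemma below_index:
  fixes W :: "nat set"
  assumes fW: "finite W" and b: "b \<in> W" and i: "i < card W"
    and lt: "b < sorted_list_of_set W ! i"
  shows "\<exists>j<i. b = sorted_list_of_set W ! j"
proof -
  let ?L = "sorted_list_of_set W"
  have "b \<in> set ?L" using fW b by simp
  then obtain j where j: "j < length ?L" "?L ! j = b" by (metis in_set_conv_nth)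
  have "j < i"
  proof (rule ccontr)
    assume "\<not> j < i"
    then have "?L ! i \<le> ?L ! j"
      using sorted_nth_mono[of ?L i j] j fW by simp
    then show False using lt j by simp
  qed
  then show ?thesis using j by auto
qed

lemma term_scale:
  fixes xi eta l c :: real
  shows "c * (xi * l ^ a1) ^ k1 * (eta * l ^ a2) ^ k2 = c * xi ^ k1 * eta ^ k2 * l ^ (a1 * k1 + a2 * k2)"
  by (simp add: power_mult_distrib power_add power_mult mult_ac)

lemma mono4:
  fixes a b B c C d D :: real
  assumes "0\<le>a" "0\<le>b" "b\<le>B" "0\<le>c" "c\<le>C" "0\<le>d" "d\<le>D"
  shows "a*b*c*d \<le> a*B*C*D"
proof -
  have "b*c \<le> B*C" using assms by (intro mult_mono) auto
  then have "b*c*d \<le> B*C*D" using assms by (intro mult_mono) auto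
  then show ?thesis using assms by (simp add: mult.assoc mult_left_mono)
qed

lemma level_lemma:
  fixes c :: "nat \<times> nat \<Rightarrow> real" and A :: "nat \<times> nat"
  assumes fin: "finite (supp2 c)"
    and i0: "1 \<le> i0"
    and lower: "\<And>i x y. 1 \<le> i \<Longrightarrow> i < i0 \<Longrightarrow> peval (phi c A i) x y \<ge> 0"
    and lampos: "\<And>n. lam n > 0" and lam0: "lam \<longlonglongrightarrow> 0"
    and bnd1: "\<And>n. \<bar>xi n\<bar> \<le> K" and bnd2: "\<And>n. \<bar>eta n\<bar> \<le> K"
    and dpos: "\<delta> > 0"
    and ev: "eventually (\<lambda>n. peval (phi c A i0) (xi n) (eta n) \<ge> \<delta>) sequentially"
  shows "eventually (\<lambda>n. peval c (xi n * lam n ^ fst A) (eta n * lam n ^ snd A) > 0) sequentially"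
proof -
  define S where "S = supp2 c"
  define W where "W = wvals c A"
  define L where "L = sorted_list_of_set W"
  define w where "w = wdeg A"
  have fS: "finite S" using fin S_def by simp
  have fW: "finite W" using fS by (simp add: W_def wvals_def S_def)
  have ci0: "i0 \<le> card W"
  proof (rule ccontr)
    assume "\<not> i0 \<le> card W"
    then have "phi c A i0 = (\<lambda>k. 0)" using supp2_phi_out[of i0 c A] by (simp add: W_def)
    then have "\<forall>n. peval (phi c A i0) (xi n) (eta n) = 0" by (simp add: peval_zero_fun)
    then show False using ev dpos by (auto simp: eventually_sequentially)
  qed
  define B where "B = L ! (i0 - 1)"
  have K0: "K \<ge> 0" using bnd1[of 0] by simp
  define h where "h n k = c k * xi n ^ fst k * eta n ^ snd k" for n k
  have expand: "peval c (xi n * lam n ^ fst A) (eta n * lam n ^ snd A) = (\<Sum>k\<in>S. h n k * lam n ^ w k)" for n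
    unfolding peval_def S_def h_def w_def wdeg_def
    by (intro sum.cong refl) (simp only: term_scale)
  define S1 where "S1 = {k\<in>S. w k < B}"
  define S2 where "S2 = {k\<in>S. w k = B}"
  define S3 where "S3 = {k\<in>S. w k > B}"
  have split: "(\<Sum>k\<in>S. f k) = (\<Sum>k\<in>S1. f k) + (\<Sum>k\<in>S2. f k) + (\<Sum>k\<in>S3. f k)" for f :: "nat\<times>nat \<Rightarrow> real"
  proof -
    have "S = S1 \<union> (S2 \<union> S3)" by (auto simp: S1_def S2_def S3_def)
    moreover have "S1 \<inter> (S2 \<union> S3) = {}" "S2 \<inter> S3 = {}" by (auto simp: S1_def S2_def S3_def)
    moreover have "finite S1" "finite S2" "finite S3" using fS by (auto simp: S1_def S2_def S3_def)
    ultimately show ?thesis by (simp add: sum.union_disjoint add.assoc)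
  qed
  have part1: "(\<Sum>k\<in>S1. h n k * lam n ^ w k) \<ge> 0" for n
  proof -
    have "(\<Sum>k\<in>S1. h n k * lam n ^ w k) = (\<Sum>b\<in>{b\<in>W. b < B}. \<Sum>k\<in>{k\<in>S1. w k = b}. h n k * lam n ^ w k)"
      by (rule sum.group[symmetric]) (use fS fW in \<open>auto simp: S1_def W_def wvals_def w_def S_def\<close>)
    also have "\<dots> \<ge> 0"
    proof (rule sum_nonneg)
      fix b assume b: "b \<in> {b\<in>W. b < B}"
      have "i0 - 1 < card W" using ci0 i0 by arith
      then obtain j where j: "j < i0 - 1" "b = L ! j"
        using below_index[OF fW, of b "i0 - 1"] b by (auto simp: B_def L_def)
      have "(\<Sum>k\<in>{k\<in>S1. w k = b}. h n k * lam n ^ w k) = lam n ^ b * (\<Sum>k\<in>{k\<in>S. w k = b}. h n k)"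
      proof -
        have "{k\<in>S1. w k = b} = {k\<in>S. w k = b}" using b by (auto simp: S1_def)
        then show ?thesis by (simp add: sum_distrib_left mult.commute)
      qed
      also have "(\<Sum>k\<in>{k\<in>S. w k = b}. h n k) = peval (phi c A (j+1)) (xi n) (eta n)"
        using peval_phi[OF fin, of "j+1" A] j ci0 by (simp add: S_def w_def h_def L_def W_def)
      finally show "(\<Sum>k\<in>{k\<in>S1. w k = b}. h n k * lam n ^ w k) \<ge> 0"
        using lower[of "j+1" "xi n" "eta n"] j lampos[of n] by simp
    qed
    finally show ?thesis .
  qed
  have part2: "(\<Sum>k\<in>S2. h n k * lam n ^ w k) = lam n ^ B * peval (phi c A i0) (xi n) (eta n)" for n
    using peval_phi[OF fin i0 ci0[unfolded W_def], of "xi n" "eta n"]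
    by (simp add: S2_def sum_distrib_left mult.commute S_def w_def h_def B_def L_def W_def)
  define M where "M = (\<Sum>k\<in>S. \<bar>c k\<bar> * K ^ fst k * K ^ snd k)"
  have M0: "M \<ge> 0" unfolding M_def using K0 by (intro sum_nonneg) simp
  have part3: "\<bar>\<Sum>k\<in>S3. h n k * lam n ^ w k\<bar> \<le> M * lam n ^ (B+1)" if l1: "lam n \<le> 1" for n
  proof -
    have "\<bar>\<Sum>k\<in>S3. h n k * lam n ^ w k\<bar> \<le> (\<Sum>k\<in>S3. \<bar>h n k * lam n ^ w k\<bar>)" by (rule sum_abs)
    also have "\<dots> \<le> (\<Sum>k\<in>S3. \<bar>c k\<bar> * K ^ fst k * K ^ snd k * lam n ^ (B+1))"
    proof (rule sum_mono)
      fix k assume k: "k \<in> S3"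
      have "lam n ^ w k \<le> lam n ^ (B+1)"
        using k l1 lampos[of n] by (intro power_decreasing) (auto simp: S3_def)
      moreover have "\<bar>xi n ^ fst k\<bar> \<le> K ^ fst k" using bnd1[of n]
        by (metis abs_ge_zero power_abs power_mono)
      moreover have "\<bar>eta n ^ snd k\<bar> \<le> K ^ snd k" using bnd2[of n]
        by (metis abs_ge_zero power_abs power_mono)
      moreover have "\<bar>h n k * lam n ^ w k\<bar> = \<bar>c k\<bar> * \<bar>xi n ^ fst k\<bar> * \<bar>eta n ^ snd k\<bar> * lam n ^ w k"
        unfolding h_def abs_mult using lampos[of n] by simp
      ultimately show "\<bar>h n k * lam n ^ w k\<bar> \<le> \<bar>c k\<bar> * K ^ fst k * K ^ snd k * lam n ^ (B+1)"
        using mono4[of "\<bar>c k\<bar>" "\<bar>xi n ^ fst k\<bar>" "K ^ fst k" "\<bar>eta n ^ snd k\<bar>" "K ^ snd k" "lam n ^ w k" "lam n ^ (B+1)"]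
          lampos[of n] by simp
    qed
    also have "\<dots> = (\<Sum>k\<in>S3. \<bar>c k\<bar> * K ^ fst k * K ^ snd k) * lam n ^ (B+1)"
      by (simp add: sum_distrib_right)
    also have "\<dots> \<le> M * lam n ^ (B+1)"
    proof -
      have "(\<Sum>k\<in>S3. \<bar>c k\<bar> * K ^ fst k * K ^ snd k) \<le> M"
        unfolding M_def using fS K0 by (intro sum_mono2) (auto simp: S3_def)
      then show ?thesis using lampos[of n] by (intro mult_right_mono) auto
    qed
    finally show ?thesis .
  qed
  have evl: "eventually (\<lambda>n. lam n < min 1 (\<delta> / (M + 1))) sequentially"
    using lam0 dpos M0 by (intro order_tendstoD) auto
  show ?thesis
    using ev evl
  proof eventually_elim
    case (elim n)
    have l1: "lam n \<le> 1" using elim by auto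
    have l2: "lam n < \<delta> / (M + 1)" using elim by auto
    have "lam n * (M + 1) < \<delta>" using l2 M0 by (simp add: pos_less_divide_eq)
    then have lM: "lam n * M < \<delta>" using lampos[of n] by (simp add: algebra_simps)
    have p2: "lam n ^ B * peval (phi c A i0) (xi n) (eta n) \<ge> lam n ^ B * \<delta>"
      using elim lampos[of n] by (intro mult_left_mono) auto
    have p3: "(\<Sum>k\<in>S3. h n k * lam n ^ w k) \<ge> - (M * lam n ^ (B+1))"
      using part3[OF l1] by linarith
    have "peval c (xi n * lam n ^ fst A) (eta n * lam n ^ snd A) =
      (\<Sum>k\<in>S1. h n k * lam n ^ w k) + lam n ^ B * peval (phi c A i0) (xi n) (eta n) + (\<Sum>k\<in>S3. h n k * lam n ^ w k)"
      using expand split part2 by simp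
    also have "\<dots> \<ge> lam n ^ B * \<delta> - M * lam n ^ (B+1)"
      using part1[of n] p2 p3 by linarith
    finally have "peval c (xi n * lam n ^ fst A) (eta n * lam n ^ snd A) \<ge> lam n ^ B * (\<delta> - lam n * M)"
      by (simp add: algebra_simps)
    moreover have "lam n ^ B * (\<delta> - lam n * M) > 0"
      using lM lampos[of n] by simp
    ultimately show ?case by linarith
  qed
qed

lemma vertex_pos:
  fixes c :: "nat \<times> nat \<Rightarrow> real"
  assumes nonneg: "\<forall>A. fst A \<ge> 1 \<and> snd A \<ge> 1 \<longrightarrow> (\<forall>x y. peval (main_form c A) x y \<ge> 0)"
    and A': "fst A' \<ge> 1" "snd A' \<ge> 1" and ks: "ks \<in> supp2 c"
    and uniq: "\<forall>k\<in>supp2 c. k \<noteq> ks \<longrightarrow> wdeg A' ks < wdeg A' k"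
    and xy: "x \<noteq> 0" "y \<noteq> 0"
  shows "c ks * x ^ fst ks * y ^ snd ks > 0"
proof -
  have mf: "main_form c A' = (\<lambda>k. if k = ks then c ks else 0)"
  proof
    fix k
    show "main_form c A' k = (if k = ks then c ks else 0)"
      using ks uniq by (auto simp: main_form_def) (metis less_le_not_le)
  qed
  have ck: "c ks \<noteq> 0" using ks by (simp add: supp2_def)
  have "supp2 (main_form c A') = {ks}" using ck by (auto simp: mf supp2_def split: if_splits)
  then have "peval (main_form c A') x y = c ks * x ^ fst ks * y ^ snd ks"
    by (simp add: peval_def mf)
  moreover have "peval (main_form c A') x y \<ge> 0" using nonneg A' by blast
  moreover have "c ks * x ^ fst ks * y ^ snd ks \<noteq> 0" using ck xy by simp
  ultimately show ?thesis by linarith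
qed

lemma vertex_lemma:
  fixes c :: "nat \<times> nat \<Rightarrow> real"
  assumes fin: "finite (supp2 c)" and ks: "ks \<in> supp2 c"
    and pos: "\<And>n. c ks * x n ^ fst ks * y n ^ snd ks > 0"
    and sx: "\<And>n. \<bar>x n\<bar> = exp (- s n)" and ty: "\<And>n. \<bar>y n\<bar> = exp (- t n)"
    and lim: "\<And>k. k \<in> supp2 c \<Longrightarrow> k \<noteq> ks \<Longrightarrow>
       filterlim (\<lambda>n. (real (fst k) - real (fst ks)) * s n + (real (snd k) - real (snd ks)) * t n) at_top sequentially"
  shows "eventually (\<lambda>n. peval c (x n) (y n) > 0) sequentially"
proof -
  define S where "S = supp2 c"
  define X where "X k n = (real (fst k) - real (fst ks)) * s n + (real (snd k) - real (snd ks)) * t n" for k n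
  define m where "m n = exp (- (real (fst ks) * s n + real (snd ks) * t n))" for n
  have absmon: "\<bar>x n ^ fst k * y n ^ snd k\<bar> = exp (- (real (fst k) * s n + real (snd k) * t n))" for n k
  proof -
    have "\<bar>x n ^ fst k * y n ^ snd k\<bar> = exp (- s n) ^ fst k * exp (- t n) ^ snd k"
      by (simp add: abs_mult power_abs sx ty)
    also have "\<dots> = exp (real (fst k) * (- s n)) * exp (real (snd k) * (- t n))"
      by (simp only: exp_of_nat_mult)
    also have "\<dots> = exp (- (real (fst k) * s n + real (snd k) * t n))"
      by (simp add: exp_add[symmetric] algebra_simps)
    finally show ?thesis .
  qed
  have ratio: "\<bar>x n ^ fst k * y n ^ snd k\<bar> = m n * exp (- X k n)" for n k
    unfolding absmon m_def X_def by (simp add: exp_add[symmetric] algebra_simps)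
  have mpos: "m n > 0" for n by (simp add: m_def)
  have lead: "c ks * x n ^ fst ks * y n ^ snd ks = \<bar>c ks\<bar> * m n" for n
  proof -
    have "c ks * x n ^ fst ks * y n ^ snd ks = \<bar>c ks * x n ^ fst ks * y n ^ snd ks\<bar>"
      using pos[of n] by simp
    also have "\<dots> = \<bar>c ks\<bar> * \<bar>x n ^ fst ks * y n ^ snd ks\<bar>" by (simp add: abs_mult mult.assoc)
    also have "\<bar>x n ^ fst ks * y n ^ snd ks\<bar> = m n" using absmon[of n ks] by (simp add: m_def)
    finally show ?thesis .
  qed
  have cpos: "\<bar>c ks\<bar> > 0" using ks by (simp add: supp2_def)
  define R where "R n = (\<Sum>k\<in>S - {ks}. \<bar>c k\<bar> * exp (- X k n))" for n
  have R0: "R \<longlonglongrightarrow> 0"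
  proof -
    have "(\<lambda>n. \<Sum>k\<in>S - {ks}. \<bar>c k\<bar> * exp (- X k n)) \<longlonglongrightarrow> (\<Sum>k\<in>S - {ks}. \<bar>c k\<bar> * 0)"
    proof (intro tendsto_sum tendsto_mult tendsto_const)
      fix k assume k: "k \<in> S - {ks}"
      have "filterlim (\<lambda>n. X k n) at_top sequentially"
        using lim[of k] k by (simp add: X_def S_def)
      then have "filterlim (\<lambda>n. - X k n) at_bot sequentially"
        by (simp only: filterlim_uminus_at_top)
      then show "(\<lambda>n. exp (- X k n)) \<longlonglongrightarrow> 0"
        by (rule filterlim_compose[OF exp_at_bot])
    qed
    then show ?thesis unfolding R_def[abs_def] by simp
  qed
  have evR: "eventually (\<lambda>n. R n < \<bar>c ks\<bar>) sequentially"
    using R0 cpos by (intro order_tendstoD) auto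
  show ?thesis using evR
  proof eventually_elim
    case (elim n)
    have decomp: "peval c (x n) (y n) = c ks * x n ^ fst ks * y n ^ snd ks + (\<Sum>k\<in>S - {ks}. c k * x n ^ fst k * y n ^ snd k)"
      unfolding peval_def S_def using fin ks by (simp add: sum.remove)
    have "\<bar>\<Sum>k\<in>S - {ks}. c k * x n ^ fst k * y n ^ snd k\<bar> \<le> (\<Sum>k\<in>S - {ks}. \<bar>c k * x n ^ fst k * y n ^ snd k\<bar>)"
      by (rule sum_abs)
    also have "\<dots> = (\<Sum>k\<in>S - {ks}. m n * (\<bar>c k\<bar> * exp (- X k n)))"
    proof (rule sum.cong[OF refl])
      fix k
      have "\<bar>c k * x n ^ fst k * y n ^ snd k\<bar> = \<bar>c k\<bar> * \<bar>x n ^ fst k * y n ^ snd k\<bar>"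
        by (simp add: abs_mult mult.assoc)
      then show "\<bar>c k * x n ^ fst k * y n ^ snd k\<bar> = m n * (\<bar>c k\<bar> * exp (- X k n))"
        using ratio[of n k] by simp
    qed
    also have "\<dots> = m n * R n" by (simp add: R_def sum_distrib_left)
    finally have "\<bar>\<Sum>k\<in>S - {ks}. c k * x n ^ fst k * y n ^ snd k\<bar> \<le> m n * R n" .
    moreover have "m n * R n < m n * \<bar>c ks\<bar>" using elim mpos[of n] by simp
    ultimately show ?case using decomp lead[of n] by (simp add: mult.commute)
  qed
qed

lemma calA_mem:
  fixes c :: "nat \<times> nat \<Rightarrow> real"
  assumes fin: "finite (supp2 c)" and ne: "supp2 c \<noteq> {}"
    and nonneg: "\<forall>A. fst A \<ge> 1 \<and> snd A \<ge> 1 \<longrightarrow> (\<forall>x y. peval (main_form c A) x y \<ge> 0)"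
    and A: "A = (a1, a2)" "a1 \<ge> 1" "a2 \<ge> 1" "coprime a1 a2"
    and zero: "peval (phi c A 1) \<xi> \<eta> = 0" and nz: "\<xi> \<noteq> 0" "\<eta> \<noteq> 0"
  shows "A \<in> calA c"
proof -
  define S where "S = supp2 c"
  define w where "w = wdeg A"
  have phi1: "phi c A 1 = main_form c A" using phi1_main_form[OF fin ne] .
  then have phi1': "phi c A (Suc 0) = main_form c A" by simp
  define F where "F = supp2 (phi c A 1)"
  have F_iff: "k \<in> F \<longleftrightarrow> k \<in> S \<and> (\<forall>k'\<in>S. w k \<le> w k')" for k
    by (auto simp: F_def phi1 phi1' main_form_def supp2_def S_def w_def)
  have phiF: "phi c A 1 k = (if k \<in> F then c k else 0)" for k
    by (auto simp: phi1 phi1' main_form_def F_iff S_def w_def supp2_def)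
  have phiF': "phi c A (Suc 0) k = (if k \<in> F then c k else 0)" for k using phiF[of k] by simp
  have sA: "snd A = a2" using A by simp
  have fF: "finite F" using fin by (auto simp: F_iff S_def intro: finite_subset)
  obtain k0 where k0: "k0 \<in> S" "\<forall>k'\<in>S. w k0 \<le> w k'"
  proof -
    have "finite (w ` S)" "w ` S \<noteq> {}" using fin ne by (auto simp: S_def)
    then have "Min (w ` S) \<in> w ` S" by (rule Min_in)
    then obtain k0 where "k0 \<in> S" "w k0 = Min (w ` S)" by auto
    moreover have "\<forall>k'\<in>S. Min (w ` S) \<le> w k'" using fin by (auto simp: S_def)
    ultimately show ?thesis using that by auto
  qed
  have "k0 \<in> F" using k0 F_iff by blast
  then have neF: "F \<noteq> {}" by blast
  define \<alpha>1 where "\<alpha>1 = Max (fst ` F)"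
  obtain v where v: "v \<in> F" "fst v = \<alpha>1"
  proof -
    have "\<alpha>1 \<in> fst ` F" unfolding \<alpha>1_def using fF neF by (intro Max_in) auto
    then show ?thesis using that by auto
  qed
  define \<beta>1 where "\<beta>1 = snd v"
  have kle: "k \<in> F \<Longrightarrow> fst k \<le> \<alpha>1" for k unfolding \<alpha>1_def using fF by auto
  have weq: "k \<in> F \<Longrightarrow> w k = w v" for k using v by (auto simp: F_iff intro: antisym)
  define j where "j k = (\<alpha>1 - fst k) div a2" for k :: "nat \<times> nat"
  have dec: "\<alpha>1 - fst k = a2 * j k \<and> snd k = \<beta>1 + a1 * j k" if k: "k \<in> F" for k
  proof -
    have e: "a1 * fst k + a2 * snd k = a1 * \<alpha>1 + a2 * \<beta>1"
      using weq[OF k] v by (simp add: w_def wdeg_def A \<beta>1_def)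
    have k1: "fst k \<le> \<alpha>1" using kle[OF k] .
    have e2: "a1 * (\<alpha>1 - fst k) + a2 * \<beta>1 = a2 * snd k"
      using e k1 by (simp add: diff_mult_distrib2)
    then have "a2 * \<beta>1 \<le> a2 * snd k" by (metis le_add2)
    then have sb: "\<beta>1 \<le> snd k" using A by simp
    have e3: "a1 * (\<alpha>1 - fst k) = a2 * (snd k - \<beta>1)"
      using e2 sb by (simp add: diff_mult_distrib2)
    have "a2 dvd a1 * (\<alpha>1 - fst k)" using e3 by simp
    moreover have "coprime a2 a1" using A by (simp add: coprime_commute)
    ultimately have "a2 dvd (\<alpha>1 - fst k)" by (simp add: coprime_dvd_mult_right_iff)
    then have d: "\<alpha>1 - fst k = a2 * j k" by (simp add: j_def)
    then have "a2 * (snd k - \<beta>1) = a2 * (a1 * j k)" using e3 by (metis mult.left_commute)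
    then have "snd k - \<beta>1 = a1 * j k" using A by simp
    then show ?thesis using d sb by simp
  qed
  have j0: "k \<in> F \<Longrightarrow> j k = 0 \<longleftrightarrow> k = v" for k
  proof
    assume k: "k \<in> F" and "j k = 0"
    then have "fst k = \<alpha>1" "snd k = \<beta>1" using dec[OF k] kle[OF k] by auto
    then show "k = v" using v \<beta>1_def by (simp add: prod_eq_iff)
  next
    assume "k = v" then show "j k = 0" using v by (simp add: j_def)
  qed
  have cp: "char_poly c A u = (\<Sum>k\<in>F. c k * u ^ j k)" for u
    unfolding char_poly_def Let_def F_def[symmetric] \<alpha>1_def[symmetric]
    by (intro sum.cong refl) (simp add: phiF phiF' j_def sA)
  have peF: "peval (phi c A 1) x y = (\<Sum>k\<in>F. c k * x ^ fst k * y ^ snd k)" for x y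
    unfolding peval_def F_def[symmetric] by (intro sum.cong refl) (simp add: phiF phiF')
  have ident: "peval (phi c A 1) x y = x ^ \<alpha>1 * y ^ \<beta>1 * char_poly c A (y ^ a1 / x ^ a2)" if x: "x \<noteq> 0" for x y
  proof -
    have "peval (phi c A 1) x y = (\<Sum>k\<in>F. x ^ \<alpha>1 * y ^ \<beta>1 * (c k * (y ^ a1 / x ^ a2) ^ j k))"
      unfolding peF
    proof (intro sum.cong refl)
      fix k assume k: "k \<in> F"
      have d0: "\<alpha>1 - fst k = a2 * j k" using dec[OF k] by blast
      have a: "\<alpha>1 = fst k + a2 * j k" using d0 kle[OF k] by arith
      have b: "snd k = \<beta>1 + a1 * j k" using dec[OF k] by simp
      have "x ^ \<alpha>1 * y ^ \<beta>1 * (c k * (y ^ a1 / x ^ a2) ^ j k)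
          = x ^ fst k * (x ^ a2) ^ j k * y ^ \<beta>1 * (c k * ((y ^ a1) ^ j k / (x ^ a2) ^ j k))"
        by (simp add: a power_add power_mult power_divide)
      also have "\<dots> = c k * x ^ fst k * (y ^ \<beta>1 * (y ^ a1) ^ j k)"
        using x by (simp add: field_simps)
      also have "\<dots> = c k * x ^ fst k * y ^ snd k"
        by (simp add: b power_add power_mult)
      finally show "c k * x ^ fst k * y ^ snd k = x ^ \<alpha>1 * y ^ \<beta>1 * (c k * (y ^ a1 / x ^ a2) ^ j k)" by (rule sym)
    qed
    also have "\<dots> = x ^ \<alpha>1 * y ^ \<beta>1 * char_poly c A (y ^ a1 / x ^ a2)"
      by (simp add: cp sum_distrib_left)
    finally show ?thesis .
  qed
  define N where "N = \<beta>1 + 1"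
  define A' where "A' = (N * a1, N * a2 + 1)"
  have wA': "wdeg A' k = N * w k + snd k" for k
    by (simp add: A'_def w_def wdeg_def A algebra_simps)
  have vS: "v \<in> S" using v F_iff by auto
  have uniq: "\<forall>k\<in>supp2 c. k \<noteq> v \<longrightarrow> wdeg A' v < wdeg A' k"
  proof (intro ballI impI)
    fix k assume kS: "k \<in> supp2 c" and kv: "k \<noteq> v"
    show "wdeg A' v < wdeg A' k"
    proof (cases "k \<in> F")
      case True
      have "j k \<noteq> 0" using j0[OF True] kv by simp
      then have "snd k > \<beta>1" using dec[OF True] A by simp
      then show ?thesis using weq[OF True] by (simp add: wA' \<beta>1_def)
    next
      case False
      then obtain k' where "k' \<in> S" "w k' < w k" using kS by (auto simp: F_iff S_def not_le)
      then have "w v < w k" using v F_iff by (meson le_less_trans)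
      then have "N * w v + N \<le> N * w k" by (metis Suc_le_eq add.commute mult_Suc_right mult_le_mono2)
      then show ?thesis by (simp add: wA' N_def \<beta>1_def)
    qed
  qed
  have mon: "c v * x ^ \<alpha>1 * y ^ \<beta>1 > 0" if "x \<noteq> 0" "y \<noteq> 0" for x y
    using vertex_pos[OF nonneg _ _ vS[unfolded S_def] uniq that] v A by (simp add: A'_def N_def \<beta>1_def)
  have cv: "c v > 0" using mon[of 1 1] by simp
  have monp: "x ^ \<alpha>1 * y ^ \<beta>1 > 0" if "x \<noteq> 0" "y \<noteq> 0" for x y :: real
    using mon[of x y] that cv by (metis mult.assoc zero_less_mult_pos)
  have g0: "char_poly c A 0 = c v"
  proof -
    have "char_poly c A 0 = (\<Sum>k\<in>F. if k = v then c v else 0)"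
      unfolding cp
    proof (intro sum.cong refl)
      fix k assume k: "k \<in> F"
      show "c k * 0 ^ j k = (if k = v then c v else 0)"
        using j0[OF k] by (cases "j k = 0") auto
    qed
    also have "\<dots> = c v" using v fF by simp
    finally show ?thesis .
  qed
  have oddA: "odd a1 \<or> odd a2"
  proof (rule ccontr)
    assume "\<not> (odd a1 \<or> odd a2)"
    then have "2 dvd gcd a1 a2" by simp
    then show False using A by simp
  qed
  have gnn: "char_poly c A u \<ge> 0" for u
  proof (cases "u = 0")
    case True then show ?thesis using g0 cv by simp
  next
    case False
    obtain x y where xy: "x \<noteq> 0" "y \<noteq> 0" "y ^ a1 / x ^ a2 = u"
    proof (cases "odd a1")
      case True
      have "root a1 u ^ a1 = u" using True by (rule odd_real_root_pow)
      moreover have "root a1 u \<noteq> 0" using False A by simp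
      ultimately show ?thesis using that[of 1 "root a1 u"] by simp
    next
      case False
      then have o2: "odd a2" using oddA by simp
      have "root a2 (1/u) ^ a2 = 1/u" using o2 by (rule odd_real_root_pow)
      moreover have "root a2 (1/u) \<noteq> 0" using \<open>u \<noteq> 0\<close> A by simp
      ultimately show ?thesis using that[of "root a2 (1/u)" 1] by simp
    qed
    have "peval (phi c A 1) x y \<ge> 0" using nonneg A phi1 phi1' by simp
    then have "x ^ \<alpha>1 * y ^ \<beta>1 * char_poly c A u \<ge> 0" using ident[OF xy(1), of y] xy by simp
    then show ?thesis using monp[OF xy(1,2)] by (simp add: zero_le_mult_iff)
  qed
  define u0 where "u0 = \<eta> ^ a1 / \<xi> ^ a2"
  have gu0: "char_poly c A u0 = 0"
    using ident[OF nz(1), of \<eta>] zero monp[OF nz] nz by (auto simp: u0_def)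
  have card3: "card F \<ge> 3"
  proof (rule ccontr)
    assume "\<not> card F \<ge> 3"
    then have c2: "card F \<le> 2" by simp
    show False
    proof (cases "F = {v}")
      case True
      then have "char_poly c A u0 = c v" using j0[OF v(1)] by (simp add: cp)
      then show False using gu0 cv by simp
    next
      case False
      then obtain w' where w': "w' \<in> F" "w' \<noteq> v" using v by auto
      have "{v, w'} \<subseteq> F" using v w' by auto
      moreover have "card {v, w'} = 2" using w' by simp
      moreover have "card {v, w'} \<le> card F" using fF \<open>{v, w'} \<subseteq> F\<close> by (rule card_mono)
      ultimately have "card {v, w'} = card F" using c2 by simp
      then have Fe: "F = {v, w'}" using fF \<open>{v, w'} \<subseteq> F\<close> by (metis card_subset_eq)
      define m where "m = j w'"
      have m1: "m \<ge> 1" using j0[OF w'(1)] w' by (simp add: m_def)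
      have gform: "char_poly c A u = c v + c w' * u ^ m" for u
        using w' j0[OF v(1)] by (simp add: cp Fe m_def)
      have cw: "c w' * u0 ^ m = - c v" using gform[of u0] gu0 by simp
      have "char_poly c A (2 * u0) = c v + 2 ^ m * (c w' * u0 ^ m)"
        by (simp add: gform power_mult_distrib algebra_simps)
      then have "char_poly c A (2 * u0) = c v * (1 - 2 ^ m)"
        using cw by (simp add: algebra_simps)
      moreover have "(2::real) ^ m \<ge> 2" using m1
        by (metis power_one_right power_increasing one_le_numeral)
      ultimately have "char_poly c A (2 * u0) < 0" using cv by (simp add: mult_pos_neg)
      then show False using gnn[of "2 * u0"] by simp
    qed
  qed
  show ?thesis
    unfolding calA_def N0sq_def
    using A card3 gnn gu0 by (auto simp: F_def)
qed

lemma peval_tendsto: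
  assumes "X \<longlonglongrightarrow> a" "Y \<longlonglongrightarrow> b"
  shows "(\<lambda>n. peval d (X n) (Y n)) \<longlonglongrightarrow> peval d a b"
  unfolding peval_def by (intro tendsto_intros assms)

lemma level1_nonneg:
  fixes c :: "nat \<times> nat \<Rightarrow> real"
  assumes fin: "finite (supp2 c)" and ne: "supp2 c \<noteq> {}"
    and nonneg: "\<forall>A. fst A \<ge> 1 \<and> snd A \<ge> 1 \<longrightarrow> (\<forall>x y. peval (main_form c A) x y \<ge> 0)"
    and A: "fst A \<ge> 1" "snd A \<ge> 1"
  shows "peval (phi c A 1) x y \<ge> 0"
proof -
  have "\<forall>x y. peval (main_form c A) x y \<ge> 0" using nonneg A by blast
  then show ?thesis using phi1_main_form[OF fin ne, of A] by simp
qed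

lemma level_contra:
  fixes c :: "nat \<times> nat \<Rightarrow> real"
  assumes fin: "finite (supp2 c)"
    and i0: "1 \<le> i0"
    and lower: "\<And>i x y. 1 \<le> i \<Longrightarrow> i < i0 \<Longrightarrow> peval (phi c A i) x y \<ge> 0"
    and lampos: "\<And>n. lam n > 0" and lam0: "lam \<longlonglongrightarrow> 0"
    and cx: "xi \<longlonglongrightarrow> a" and cy: "eta \<longlonglongrightarrow> b"
    and posi: "peval (phi c A i0) a b > 0"
    and neg: "\<And>n. peval c (xi n * lam n ^ fst A) (eta n * lam n ^ snd A) < 0"
  shows False
proof -
  obtain K1 where K1: "\<And>n. norm (xi n) \<le> K1"
    using convergent_imp_Bseq[OF convergentI[OF cx]] by (auto simp: Bseq_def)
  obtain K2 where K2: "\<And>n. norm (eta n) \<le> K2"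
    using convergent_imp_Bseq[OF convergentI[OF cy]] by (auto simp: Bseq_def)
  define K where "K = max K1 K2"
  have b1: "\<bar>xi n\<bar> \<le> K" for n using K1[of n] by (simp add: K_def)
  have b2: "\<bar>eta n\<bar> \<le> K" for n using K2[of n] by (simp add: K_def)
  have "(\<lambda>n. peval (phi c A i0) (xi n) (eta n)) \<longlonglongrightarrow> peval (phi c A i0) a b"
    by (rule peval_tendsto[OF cx cy])
  then have ev: "eventually (\<lambda>n. peval (phi c A i0) (xi n) (eta n) \<ge> peval (phi c A i0) a b / 2) sequentially"
  proof -
    have "eventually (\<lambda>n. peval (phi c A i0) (xi n) (eta n) > peval (phi c A i0) a b / 2) sequentially"
      using order_tendstoD(1)[OF \<open>(\<lambda>n. peval (phi c A i0) (xi n) (eta n)) \<longlonglongrightarrow> peval (phi c A i0) a b\<close>, of "peval (phi c A i0) a b / 2"] posi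
      by simp
    then show ?thesis by (rule eventually_mono) simp
  qed
  have "eventually (\<lambda>n. peval c (xi n * lam n ^ fst A) (eta n * lam n ^ snd A) > 0) sequentially"
    by (rule level_lemma[OF fin i0 lower lampos lam0 b1 b2 _ ev]) (use posi in auto)
  then show False using neg by (metis (mono_tags, lifting) eventually_sequentially le_refl not_less_iff_gr_or_eq)
qed

lemma edge_case:
  fixes c :: "nat \<times> nat \<Rightarrow> real"
  assumes fin: "finite (supp2 c)" and ne: "supp2 c \<noteq> {}"
    and nonneg: "\<forall>A. fst A \<ge> 1 \<and> snd A \<ge> 1 \<longrightarrow> (\<forall>x y. peval (main_form c A) x y \<ge> 0)"
    and hC: "\<forall>A\<in>calA c. C2 c A \<or> C2tilde c A"
    and A: "A = (a1, a2)" "a1 \<ge> 1" "a2 \<ge> 1" "coprime a1 a2"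
    and lampos: "\<And>n. lam n > 0" and lam0: "lam \<longlonglongrightarrow> 0"
    and cx: "xi \<longlonglongrightarrow> a" and cy: "eta \<longlonglongrightarrow> b" and ab: "a \<noteq> 0" "b \<noteq> 0"
    and neg: "\<And>n. peval c (xi n * lam n ^ a1) (eta n * lam n ^ a2) < 0"
  shows False
proof -
  have neg': "\<And>n. peval c (xi n * lam n ^ fst A) (eta n * lam n ^ snd A) < 0" using neg A by simp
  have l1: "peval (phi c A 1) x y \<ge> 0" for x y
    using level1_nonneg[OF fin ne nonneg] A by simp
  have contra: "False" if "1 \<le> i0" "\<And>i x y. 1 \<le> i \<Longrightarrow> i < i0 \<Longrightarrow> peval (phi c A i) x y \<ge> 0"
      "peval (phi c A i0) a b > 0" for i0
    by (rule level_contra[OF fin that(1) that(2) lampos lam0 cx cy that(3) neg'])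
  show False
  proof (cases "peval (phi c A 1) a b > 0")
    case True
    show False by (rule contra[of 1]) (use True in auto)
  next
    case False
    then have z: "peval (phi c A 1) a b = 0" using l1[of a b] by simp
    have Acal: "A \<in> calA c" by (rule calA_mem[OF fin ne nonneg A z ab])
    have l1': "\<And>i x y. 1 \<le> i \<Longrightarrow> i < 2 \<Longrightarrow> peval (phi c A i) x y \<ge> 0"
    proof -
      fix i x y assume "1 \<le> i" "i < (2::nat)"
      then have "i = 1" by simp
      then show "peval (phi c A i) x y \<ge> 0" using l1 by simp
    qed
    from hC Acal have "C2 c A \<or> C2tilde c A" by blast
    then show False
    proof
      assume "C2 c A"
      then have "peval (phi c A 2) a b > 0" using z ab by (simp add: C2_def)
      then show False by (intro contra[of 2] l1') auto
    next
      assume ct: "C2tilde c A"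
      show False
      proof (cases "peval (phi c A 2) a b > 0")
        case True
        then show False by (intro contra[of 2] l1') auto
      next
        case False
        have "peval (phi c A 2) a b \<ge> 0" using ct by (simp add: C2tilde_def)
        then have z2: "peval (phi c A 2) a b = 0" using False by linarith
        have p3: "peval (phi c A 3) a b > 0" using ct z z2 ab by (simp add: C2tilde_def)
        have l2: "\<And>i x y. 1 \<le> i \<Longrightarrow> i < 3 \<Longrightarrow> peval (phi c A i) x y \<ge> 0"
        proof -
          fix i x y assume "1 \<le> i" "i < (3::nat)"
          then have "i = 1 \<or> i = 2" by auto
          then show "peval (phi c A i) x y \<ge> 0" using l1 ct by (auto simp: C2tilde_def)
        qed
        show False by (rule contra[of 3, OF _ l2 p3]) auto
      qed
    qed
  qed
qed

lemma rational_dir: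
  fixes om :: real and d1 d2 :: int
  assumes om: "0 \<le> om" "om \<le> 1" and nz: "d1 \<noteq> 0 \<or> d2 \<noteq> 0"
    and eq: "om * d1 + (1 - om) * d2 = 0"
  shows "\<exists>a1 a2 :: nat. coprime a1 a2 \<and> a1 + a2 > 0 \<and> om * real (a1 + a2) = real a1"
proof -
  define p1 where "p1 = nat \<bar>d2\<bar>"
  define p2 where "p2 = nat \<bar>d1\<bar>"
  have key: "om * (\<bar>real_of_int d2\<bar> + \<bar>real_of_int d1\<bar>) = \<bar>real_of_int d2\<bar>"
  proof -
    consider "d1 \<ge> 0" "d2 \<ge> 0" | "d1 \<ge> 0" "d2 < 0" | "d1 < 0" "d2 \<ge> 0" | "d1 < 0" "d2 < 0" by linarith
    then show ?thesis
    proof cases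
      case 1
      then have "om * d1 \<ge> 0" "(1 - om) * d2 \<ge> 0" using om by auto
      then have a: "om * d1 = 0" "(1 - om) * d2 = 0" using eq by linarith+
      show ?thesis
      proof (cases "d1 = 0")
        case True then have "d2 \<noteq> 0" using nz by simp
        then have "om = 1" using a by simp
        then show ?thesis using True by simp
      next
        case False then have "om = 0" using a by simp
        then show ?thesis using a by simp
      qed
    next
      case 2
      then show ?thesis using eq by (simp add: algebra_simps)
    next
      case 3
      then show ?thesis using eq by (simp add: algebra_simps)
    next
      case 4
      then have "om * d1 \<le> 0" "(1 - om) * d2 \<le> 0" using om by (auto simp: mult_nonneg_nonpos)
      then have a: "om * d1 = 0" "(1 - om) * d2 = 0" using eq by linarith+
      then have "om = 0" using 4 by simp
      then show ?thesis using a 4 by simp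
    qed
  qed
  have p12: "om * (real p1 + real p2) = real p1" using key by (simp add: p1_def p2_def)
  have pnz: "p1 \<noteq> 0 \<or> p2 \<noteq> 0" using nz by (auto simp: p1_def p2_def)
  define g where "g = gcd p1 p2"
  have g0: "g > 0" using pnz by (simp add: g_def)
  define a1 where "a1 = p1 div g"
  define a2 where "a2 = p2 div g"
  have cop: "coprime a1 a2" unfolding a1_def a2_def g_def by (rule div_gcd_coprime[OF pnz])
  have e1: "p1 = a1 * g" by (simp add: a1_def g_def)
  have e2: "p2 = a2 * g" by (simp add: a2_def g_def)
  have "a1 + a2 > 0" using pnz e1 e2 by auto
  moreover have "om * real (a1 + a2) = real a1"
  proof -
    have "om * (real (a1 + a2)) * real g = real a1 * real g"
      using p12 e1 e2 by (simp add: algebra_simps)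
    then show ?thesis using g0 by simp
  qed
  ultimately show ?thesis using cop by blast
qed

lemma approx_expose:
  fixes om :: real and S :: "(nat \<times> nat) set"
  assumes fin: "finite S" and om: "0 \<le> om" "om \<le> 1" and k0: "k0 \<in> S"
    and strict: "\<And>k. k \<in> S \<Longrightarrow> k \<noteq> k0 \<Longrightarrow>
      om * real (fst k0) + (1 - om) * real (snd k0) < om * real (fst k) + (1 - om) * real (snd k)"
  shows "\<exists>A'. fst A' \<ge> 1 \<and> snd A' \<ge> 1 \<and> (\<forall>k\<in>S. k \<noteq> k0 \<longrightarrow> wdeg A' k0 < wdeg A' k)"
proof (cases "S - {k0} = {}")
  case True
  then show ?thesis by (intro exI[of _ "(1,1)"]) auto
next
  case False
  define W where "W k = om * real (fst k) + (1 - om) * real (snd k)" for k :: "nat \<times> nat"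
  define T where "T = S - {k0}"
  have fT: "finite T" "T \<noteq> {}" using fin False by (auto simp: T_def)
  define \<delta> where "\<delta> = Min ((\<lambda>k. W k - W k0) ` T)"
  have \<delta>pos: "\<delta> > 0"
    unfolding \<delta>_def using fT strict by (auto simp: W_def T_def)
  have \<delta>le: "k \<in> T \<Longrightarrow> \<delta> \<le> W k - W k0" for k unfolding \<delta>_def using fT by auto
  define M where "M = (\<Sum>k\<in>S. real (fst k) + real (snd k)) + real (fst k0) + real (snd k0)"
  have Mb: "\<bar>real (fst k) - real (fst k0)\<bar> + \<bar>real (snd k) - real (snd k0)\<bar> \<le> M" if k: "k \<in> S" for k
  proof -
    have "real (fst k) + real (snd k) \<le> (\<Sum>k\<in>S. real (fst k) + real (snd k))"
      using fin k by (intro member_le_sum) auto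
    then show ?thesis unfolding M_def by linarith
  qed
  obtain N :: nat where N: "(M + 1) / \<delta> < real N" using reals_Archimedean2 by blast
  have N\<delta>: "M + 1 < real N * \<delta>" using N \<delta>pos by (simp add: pos_divide_less_eq)
  define z1 where "z1 = real N * om"
  define z2 where "z2 = real N * (1 - om)"
  have z0: "z1 \<ge> 0" "z2 \<ge> 0" using om by (auto simp: z1_def z2_def)
  define a1 where "a1 = nat \<lfloor>z1\<rfloor> + 1"
  define a2 where "a2 = nat \<lfloor>z2\<rfloor> + 1"
  have ra1: "real a1 = of_int \<lfloor>z1\<rfloor> + 1" using z0 by (simp add: a1_def)
  have ra2: "real a2 = of_int \<lfloor>z2\<rfloor> + 1" using z0 by (simp add: a2_def)
  define e1 where "e1 = real a1 - z1"
  define e2 where "e2 = real a2 - z2"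
  have e1b: "0 < e1" "e1 \<le> 1" unfolding e1_def ra1 by linarith+
  have e2b: "0 < e2" "e2 \<le> 1" unfolding e2_def ra2 by linarith+
  have "wdeg (a1, a2) k0 < wdeg (a1, a2) k" if k: "k \<in> S" "k \<noteq> k0" for k
  proof -
    define d1 where "d1 = real (fst k) - real (fst k0)"
    define d2 where "d2 = real (snd k) - real (snd k0)"
    have kT: "k \<in> T" using k by (simp add: T_def)
    have Wd: "om * d1 + (1 - om) * d2 \<ge> \<delta>" using \<delta>le[OF kT] by (simp add: W_def d1_def d2_def algebra_simps)
    have dM: "\<bar>d1\<bar> + \<bar>d2\<bar> \<le> M" using Mb[OF k(1)] by (simp add: d1_def d2_def)
    have "real (wdeg (a1, a2) k) - real (wdeg (a1, a2) k0) = real a1 * d1 + real a2 * d2"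
      by (simp add: wdeg_def d1_def d2_def algebra_simps)
    also have "\<dots> = real N * (om * d1 + (1 - om) * d2) + (e1 * d1 + e2 * d2)"
      by (simp add: e1_def e2_def z1_def z2_def algebra_simps)
    also have "\<dots> \<ge> real N * \<delta> - (\<bar>d1\<bar> + \<bar>d2\<bar>)"
    proof -
      have "real N * (om * d1 + (1 - om) * d2) \<ge> real N * \<delta>" using Wd by (simp add: mult_left_mono)
      moreover have "e1 * d1 \<ge> - \<bar>d1\<bar>"
      proof -
        have "\<bar>e1 * d1\<bar> \<le> \<bar>d1\<bar>" using e1b mult_right_mono[of e1 1 "\<bar>d1\<bar>"] by (simp add: abs_mult)
        then show ?thesis by linarith
      qed
      moreover have "e2 * d2 \<ge> - \<bar>d2\<bar>"
      proof -
        have "\<bar>e2 * d2\<bar> \<le> \<bar>d2\<bar>" using e2b mult_right_mono[of e2 1 "\<bar>d2\<bar>"] by (simp add: abs_mult)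
        then show ?thesis by linarith
      qed
      ultimately show ?thesis by linarith
    qed
    finally have "real (wdeg (a1, a2) k) - real (wdeg (a1, a2) k0) > 0" using dM N\<delta> by linarith
    then show ?thesis by simp
  qed
  then show ?thesis by (intro exI[of _ "(a1, a2)"]) (auto simp: a1_def a2_def)
qed

lemma axis_x:
  fixes c :: "nat \<times> nat \<Rightarrow> real"
  assumes fin: "finite (supp2 c)"
    and nonneg: "\<forall>A. fst A \<ge> 1 \<and> snd A \<ge> 1 \<longrightarrow> (\<forall>x y. peval (main_form c A) x y \<ge> 0)"
    and p00: "peval c 0 0 = 0" and y0: "y \<longlonglongrightarrow> 0"
    and neg: "\<And>n. peval c 0 (y n) < 0"
  shows False
proof -
  define S where "S = supp2 c"
  have ynz: "y n \<noteq> 0" for n using neg[of n] p00 by auto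
  define S0 where "S0 = {k\<in>S. fst k = 0}"
  show False
  proof (cases "S0 = {}")
    case True
    have "peval c 0 (y 0) = 0"
      unfolding peval_def S_def[symmetric]
      by (rule sum.neutral) (use True in \<open>auto simp: S0_def\<close>)
    then show False using neg[of 0] by simp
  next
    case False
    have fS0: "finite S0" using fin by (simp add: S0_def S_def)
    define m where "m = Min (snd ` S0)"
    have "m \<in> snd ` S0" unfolding m_def using fS0 False by (intro Min_in) auto
    then have ks: "(0, m) \<in> S" by (auto simp: S0_def)
    have mle: "k \<in> S \<Longrightarrow> fst k = 0 \<Longrightarrow> m \<le> snd k" for k
      unfolding m_def using fS0 by (auto simp: S0_def)
    define A where "A = (m + 1, 1::nat)"
    have wA: "wdeg A k = (m+1) * fst k + snd k" for k by (simp add: A_def wdeg_def)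
    have ne: "supp2 c \<noteq> {}" using ks S_def by auto
    define MM where "MM = {k\<in>S. \<forall>k'\<in>S. wdeg A k \<le> wdeg A k'}"
    have ksM: "(0, m) \<in> MM"
    proof -
      have "m \<le> wdeg A k'" if "k' \<in> S" for k'
      proof (cases "fst k' = 0")
        case True then show ?thesis using mle[OF that] by (simp add: wA)
      next
        case False then have "(m+1) * fst k' \<ge> m + 1" using mult_le_mono2[of 1 "fst k'" "m+1"] by simp
        then show ?thesis by (simp add: wA)
      qed
      then show ?thesis using ks by (simp add: MM_def wA)
    qed
    have other: "k \<in> MM \<Longrightarrow> k \<noteq> (0, m) \<Longrightarrow> fst k > 0" for k
    proof (rule ccontr)
      assume k: "k \<in> MM" "k \<noteq> (0, m)" "\<not> fst k > 0"
      then have k1: "fst k = 0" by simp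
      have "wdeg A k \<le> wdeg A (0, m)" using k ks by (auto simp: MM_def)
      then have "snd k \<le> m" using k1 by (simp add: wA)
      moreover have "m \<le> snd k" using mle k1 k by (auto simp: MM_def)
      ultimately have "k = (0, m)" using k1 by (simp add: prod_eq_iff)
      then show False using k by simp
    qed
    have suppM: "supp2 (main_form c A) = MM" by (auto simp: supp2_def main_form_def MM_def S_def)
    have fM: "finite MM" using fin by (auto simp: MM_def S_def)
    have val: "peval (phi c A 1) 0 \<sigma> = c (0, m) * \<sigma> ^ m" for \<sigma> :: real
    proof -
      have "peval (phi c A 1) 0 \<sigma> = (\<Sum>k\<in>MM. main_form c A k * 0 ^ fst k * \<sigma> ^ snd k)"
        using phi1_main_form[OF fin ne, of A] suppM by (simp add: peval_def)
      also have "\<dots> = main_form c A (0, m) * 0 ^ 0 * \<sigma> ^ m + (\<Sum>k\<in>MM - {(0, m)}. main_form c A k * 0 ^ fst k * \<sigma> ^ snd k)"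
        using fM ksM by (simp add: sum.remove)
      also have "(\<Sum>k\<in>MM - {(0, m)}. main_form c A k * 0 ^ fst k * \<sigma> ^ snd k) = 0"
        by (rule sum.neutral) (auto dest: other)
      also have "main_form c A (0, m) = c (0, m)" using ksM by (simp add: main_form_def MM_def S_def)
      finally show ?thesis by simp
    qed
    have cpos: "\<bar>c (0, m)\<bar> > 0" using ks by (simp add: S_def supp2_def)
    have l1: "peval (phi c A 1) x y \<ge> 0" for x y
      using level1_nonneg[OF fin ne nonneg] by (simp add: A_def)
    have vs: "peval (phi c A 1) 0 (sgn (y n)) = \<bar>c (0, m)\<bar>" for n
    proof -
      have "\<bar>peval (phi c A 1) 0 (sgn (y n))\<bar> = \<bar>c (0, m)\<bar>"
        using ynz[of n] val[of "sgn (y n)"] by (simp add: abs_mult power_abs)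
      then show ?thesis using l1[of 0 "sgn (y n)"] by simp
    qed
    have "eventually (\<lambda>n. peval c (0 * \<bar>y n\<bar> ^ fst A) (sgn (y n) * \<bar>y n\<bar> ^ snd A) > 0) sequentially"
    proof (rule level_lemma[OF fin order_refl, of A "\<lambda>n. \<bar>y n\<bar>" "\<lambda>n. 0" 1 "\<lambda>n. sgn (y n)" "\<bar>c (0, m)\<bar>"])
      show "(\<lambda>n. \<bar>y n\<bar>) \<longlonglongrightarrow> 0" using tendsto_rabs_zero[OF y0] .
    qed (use ynz vs cpos in \<open>auto simp: abs_sgn_eq\<close>)
    then have "eventually (\<lambda>n. peval c 0 (y n) > 0) sequentially"
      by (simp add: A_def sgn_mult_abs)
    then show False using neg by (metis (mono_tags, lifting) eventually_sequentially le_refl not_less_iff_gr_or_eq)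
  qed
qed

lemma axis_y:
  fixes c :: "nat \<times> nat \<Rightarrow> real"
  assumes fin: "finite (supp2 c)"
    and nonneg: "\<forall>A. fst A \<ge> 1 \<and> snd A \<ge> 1 \<longrightarrow> (\<forall>x y. peval (main_form c A) x y \<ge> 0)"
    and p00: "peval c 0 0 = 0" and x0: "x \<longlonglongrightarrow> 0"
    and neg: "\<And>n. peval c (x n) 0 < 0"
  shows False
proof -
  define S where "S = supp2 c"
  have xnz: "x n \<noteq> 0" for n using neg[of n] p00 by auto
  define S0 where "S0 = {k\<in>S. snd k = 0}"
  show False
  proof (cases "S0 = {}")
    case True
    have "peval c (x 0) 0 = 0"
      unfolding peval_def S_def[symmetric]
    proof (rule sum.neutral, intro ballI)
      fix k assume "k \<in> S"
      then have "snd k > 0" using True by (cases k) (auto simp: S0_def)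
      then show "c k * x 0 ^ fst k * 0 ^ snd k = 0" by simp
    qed
    then show False using neg[of 0] by simp
  next
    case False
    have fS0: "finite S0" using fin by (simp add: S0_def S_def)
    define m where "m = Min (fst ` S0)"
    have "m \<in> fst ` S0" unfolding m_def using fS0 False by (intro Min_in) auto
    then have ks: "(m, 0) \<in> S" by (auto simp: S0_def)
    have mle: "k \<in> S \<Longrightarrow> snd k = 0 \<Longrightarrow> m \<le> fst k" for k
      unfolding m_def using fS0 by (auto simp: S0_def)
    define A where "A = (1::nat, m + 1)"
    have wA: "wdeg A k = fst k + (m+1) * snd k" for k by (simp add: A_def wdeg_def)
    have ne: "supp2 c \<noteq> {}" using ks S_def by auto
    define MM where "MM = {k\<in>S. \<forall>k'\<in>S. wdeg A k \<le> wdeg A k'}"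
    have ksM: "(m, 0) \<in> MM"
    proof -
      have "m \<le> wdeg A k'" if "k' \<in> S" for k'
      proof (cases "snd k' = 0")
        case True then show ?thesis using mle[OF that] by (simp add: wA)
      next
        case False then have "(m+1) * snd k' \<ge> m + 1" using mult_le_mono2[of 1 "snd k'" "m+1"] by simp
        then show ?thesis by (simp add: wA)
      qed
      then show ?thesis using ks by (simp add: MM_def wA)
    qed
    have other: "k \<in> MM \<Longrightarrow> k \<noteq> (m, 0) \<Longrightarrow> snd k > 0" for k
    proof (rule ccontr)
      assume k: "k \<in> MM" "k \<noteq> (m, 0)" "\<not> snd k > 0"
      then have k1: "snd k = 0" by simp
      have "wdeg A k \<le> wdeg A (m, 0)" using k ks by (auto simp: MM_def)
      then have "fst k \<le> m" using k1 by (simp add: wA)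
      moreover have "m \<le> fst k" using mle k1 k by (auto simp: MM_def)
      ultimately have "k = (m, 0)" using k1 by (simp add: prod_eq_iff)
      then show False using k by simp
    qed
    have suppM: "supp2 (main_form c A) = MM" by (auto simp: supp2_def main_form_def MM_def S_def)
    have fM: "finite MM" using fin by (auto simp: MM_def S_def)
    have val: "peval (phi c A 1) \<sigma> 0 = c (m, 0) * \<sigma> ^ m" for \<sigma> :: real
    proof -
      have "peval (phi c A 1) \<sigma> 0 = (\<Sum>k\<in>MM. main_form c A k * \<sigma> ^ fst k * 0 ^ snd k)"
        using phi1_main_form[OF fin ne, of A] suppM by (simp add: peval_def)
      also have "\<dots> = main_form c A (m, 0) * \<sigma> ^ m * 0 ^ 0 + (\<Sum>k\<in>MM - {(m, 0)}. main_form c A k * \<sigma> ^ fst k * 0 ^ snd k)"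
        using fM ksM by (simp add: sum.remove)
      also have "(\<Sum>k\<in>MM - {(m, 0)}. main_form c A k * \<sigma> ^ fst k * 0 ^ snd k) = 0"
        by (rule sum.neutral) (auto dest: other)
      also have "main_form c A (m, 0) = c (m, 0)" using ksM by (simp add: main_form_def MM_def S_def)
      finally show ?thesis by simp
    qed
    have cpos: "\<bar>c (m, 0)\<bar> > 0" using ks by (simp add: S_def supp2_def)
    have l1: "peval (phi c A 1) x y \<ge> 0" for x y
      using level1_nonneg[OF fin ne nonneg] by (simp add: A_def)
    have vs: "peval (phi c A 1) (sgn (x n)) 0 = \<bar>c (m, 0)\<bar>" for n
    proof -
      have "\<bar>peval (phi c A 1) (sgn (x n)) 0\<bar> = \<bar>c (m, 0)\<bar>"
        using xnz[of n] val[of "sgn (x n)"] by (simp add: abs_mult power_abs)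
      then show ?thesis using l1[of "sgn (x n)" 0] by simp
    qed
    have "eventually (\<lambda>n. peval c (sgn (x n) * \<bar>x n\<bar> ^ fst A) (0 * \<bar>x n\<bar> ^ snd A) > 0) sequentially"
    proof (rule level_lemma[OF fin order_refl, of A "\<lambda>n. \<bar>x n\<bar>" "\<lambda>n. sgn (x n)" 1 "\<lambda>n. 0" "\<bar>c (m, 0)\<bar>"])
      show "(\<lambda>n. \<bar>x n\<bar>) \<longlonglongrightarrow> 0" using tendsto_rabs_zero[OF x0] .
    qed (use xnz vs cpos in \<open>auto simp: abs_sgn_eq\<close>)
    then have "eventually (\<lambda>n. peval c (x n) 0 > 0) sequentially"
      by (simp add: A_def sgn_mult_abs)
    then show False using neg by (metis (mono_tags, lifting) eventually_sequentially le_refl not_less_iff_gr_or_eq)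
  qed
qed

lemma ev_subseq:
  assumes "eventually P sequentially" "strict_mono r"
  shows "eventually (\<lambda>n. P (r n)) sequentially"
proof -
  obtain N where N: "\<And>n. n \<ge> N \<Longrightarrow> P n" using assms(1) by (auto simp: eventually_sequentially)
  have "n \<ge> N \<Longrightarrow> P (r n)" for n using N seq_suble[OF assms(2), of n] by simp
  then show ?thesis by (auto simp: eventually_sequentially)
qed

lemma filterlim_subseq_comp:
  assumes "filterlim f at_top sequentially" "strict_mono r"
  shows "filterlim (\<lambda>n. f (r n)) at_top sequentially"
  using filterlim_compose[OF assms(1) filterlim_subseq[OF assms(2)]] by (simp add: o_def)

lemma vfinish:
  fixes c :: "nat \<times> nat \<Rightarrow> real"
  assumes fin: "finite (supp2 c)"
    and nonneg: "\<forall>A. fst A \<ge> 1 \<and> snd A \<ge> 1 \<longrightarrow> (\<forall>x y. peval (main_form c A) x y \<ge> 0)"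
    and ks: "ks \<in> supp2 c" and A': "fst A' \<ge> 1" "snd A' \<ge> 1"
    and uniq: "\<forall>k\<in>supp2 c. k \<noteq> ks \<longrightarrow> wdeg A' ks < wdeg A' k"
    and nz: "\<And>n. x n \<noteq> 0" "\<And>n. y n \<noteq> 0"
    and neg: "\<And>n. peval c (x n) (y n) < 0"
    and sx: "\<And>n. \<bar>x n\<bar> = exp (- s n)" and ty: "\<And>n. \<bar>y n\<bar> = exp (- t n)"
    and lim: "\<And>k. k \<in> supp2 c \<Longrightarrow> k \<noteq> ks \<Longrightarrow>
       filterlim (\<lambda>n. (real (fst k) - real (fst ks)) * s n + (real (snd k) - real (snd ks)) * t n) at_top sequentially"
  shows False
proof -
  have pos: "c ks * x n ^ fst ks * y n ^ snd ks > 0" for n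
    by (rule vertex_pos[OF nonneg A' ks uniq nz(1) nz(2)])
  have "eventually (\<lambda>n. peval c (x n) (y n) > 0) sequentially"
    by (rule vertex_lemma[OF fin ks pos sx ty lim])
  then show False using neg by (metis (mono_tags, lifting) eventually_sequentially le_refl not_less_iff_gr_or_eq)
qed

lemma lim_weight:
  fixes s t :: "nat \<Rightarrow> real" and om d1 d2 :: real
  assumes sinf: "filterlim s at_top sequentially" and tinf: "filterlim t at_top sequentially"
    and spos: "\<And>n. s n > 0" and tpos: "\<And>n. t n > 0"
    and omc: "(\<lambda>n. s n / (s n + t n)) \<longlonglongrightarrow> om"
    and pos: "om * d1 + (1 - om) * d2 > 0"
  shows "filterlim (\<lambda>n. d1 * s n + d2 * t n) at_top sequentially"
proof -
  define q where "q n = s n / (s n + t n)" for n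
  have eq: "d1 * s n + d2 * t n = (q n * d1 + (1 - q n) * d2) * (s n + t n)" for n
  proof -
    have "s n + t n > 0" using spos[of n] tpos[of n] by simp
    then have qs: "q n * (s n + t n) = s n" by (simp add: q_def)
    then have qt: "(1 - q n) * (s n + t n) = t n" by (simp add: algebra_simps)
    have "(q n * d1 + (1 - q n) * d2) * (s n + t n) = d1 * (q n * (s n + t n)) + d2 * ((1 - q n) * (s n + t n))"
      by (simp add: algebra_simps)
    then show ?thesis using qs qt by simp
  qed
  have "(\<lambda>n. q n * d1 + (1 - q n) * d2) \<longlonglongrightarrow> om * d1 + (1 - om) * d2"
    using omc unfolding q_def[abs_def] by (intro tendsto_intros)
  then have "filterlim (\<lambda>n. (q n * d1 + (1 - q n) * d2) * (s n + t n)) at_top sequentially"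
    by (rule filterlim_tendsto_pos_mult_at_top[OF _ pos filterlim_at_top_add_at_top[OF sinf tinf]])
  then show ?thesis by (simp only: eq)
qed

lemma edge_branch:
  fixes c :: "nat \<times> nat \<Rightarrow> real"
  assumes fin: "finite (supp2 c)" and ne: "supp2 c \<noteq> {}"
    and nonneg: "\<forall>A. fst A \<ge> 1 \<and> snd A \<ge> 1 \<longrightarrow> (\<forall>x y. peval (main_form c A) x y \<ge> 0)"
    and hC: "\<forall>A\<in>calA c. C2 c A \<or> C2tilde c A"
    and nz: "\<And>n. x n \<noteq> 0" "\<And>n. y n \<noteq> 0"
    and neg: "\<And>n. peval c (x n) (y n) < 0"
    and sx: "\<And>n. \<bar>x n\<bar> = exp (- s n)" and ty: "\<And>n. \<bar>y n\<bar> = exp (- t n)"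
    and sinf: "filterlim s at_top sequentially" and tinf: "filterlim t at_top sequentially"
    and cop: "coprime a1 a2" and apos: "a1 + a2 > 0"
    and Dbd: "\<And>n. \<bar>real a1 * t n - real a2 * s n\<bar> \<le> C"
  shows False
proof -
  have a1: "a1 \<ge> 1"
  proof (rule ccontr)
    assume "\<not> a1 \<ge> 1"
    then have "a1 = 0" by simp
    then have "a2 = 1" using cop by simp
    then have "\<And>n. s n \<le> C" using Dbd \<open>a1 = 0\<close> by (metis abs_minus_cancel abs_le_D1 diff_0 mult_zero_left of_nat_0 mult_1 of_nat_1)
    moreover have "eventually (\<lambda>n. s n > C) sequentially" using sinf by (simp add: filterlim_at_top_dense)
    ultimately show False by (auto simp: eventually_sequentially) (meson not_le order_refl)
  qed
  have a2: "a2 \<ge> 1"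
  proof (rule ccontr)
    assume "\<not> a2 \<ge> 1"
    then have "a2 = 0" by simp
    then have "a1 = 1" using cop by simp
    then have "\<And>n. t n \<le> C" using Dbd \<open>a2 = 0\<close> by (metis abs_le_D1 diff_zero mult_zero_left of_nat_0 mult_1 of_nat_1)
    moreover have "eventually (\<lambda>n. t n > C) sequentially" using tinf by (simp add: filterlim_at_top_dense)
    ultimately show False by (auto simp: eventually_sequentially) (meson not_le order_refl)
  qed
  define lam where "lam n = exp (- s n / real a1)" for n
  have lampos: "lam n > 0" for n by (simp add: lam_def)
  have l1: "lam n ^ a1 = exp (- s n)" for n
  proof -
    have "lam n ^ a1 = exp (real a1 * (- s n / real a1))" unfolding lam_def by (simp only: exp_of_nat_mult)
    then show ?thesis using a1 by simp
  qed
  have l2: "lam n ^ a2 = exp (real a2 * (- s n / real a1))" for n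
    unfolding lam_def by (simp only: exp_of_nat_mult)
  define xi where "xi n = x n / lam n ^ a1" for n
  define eta where "eta n = y n / lam n ^ a2" for n
  have xi_eq: "xi n * lam n ^ a1 = x n" for n using lampos[of n] by (simp add: xi_def)
  have eta_eq: "eta n * lam n ^ a2 = y n" for n using lampos[of n] by (simp add: eta_def)
  have axi: "\<bar>xi n\<bar> = 1" for n using sx[of n] by (simp add: xi_def l1 abs_divide)
  have aeta: "\<bar>eta n\<bar> = exp (- (real a1 * t n - real a2 * s n) / real a1)" for n
  proof -
    have "\<bar>eta n\<bar> = exp (- t n) / exp (real a2 * (- s n / real a1))"
      using ty[of n] by (simp add: eta_def l2 abs_divide)
    also have "\<dots> = exp (- t n - real a2 * (- s n / real a1))" by (rule exp_diff[symmetric])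
    also have "- t n - real a2 * (- s n / real a1) = - (real a1 * t n - real a2 * s n) / real a1"
      using a1 by (simp add: field_simps)
    finally show ?thesis .
  qed
  define E where "E = exp (C / real a1)"
  have etab: "\<bar>eta n\<bar> \<le> E" "\<bar>eta n\<bar> \<ge> exp (- C / real a1)" for n
  proof -
    define z where "z = - (real a1 * t n - real a2 * s n) / real a1"
    have "\<bar>z\<bar> \<le> C / real a1"
      using Dbd[of n] a1 unfolding z_def by (simp add: abs_divide divide_right_mono)
    then have "z \<le> C / real a1" "- C / real a1 \<le> z" by (linarith, simp add: abs_le_iff)
    then show "\<bar>eta n\<bar> \<le> E" "\<bar>eta n\<bar> \<ge> exp (- C / real a1)"
      unfolding aeta E_def z_def[symmetric] by auto
  qed
  have bnd: "bounded (range (\<lambda>n. (xi n, eta n)))"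
  proof (rule bounded_subset)
    show "bounded ({-1..1} \<times> {-E..E} :: (real \<times> real) set)"
      by (intro bounded_Times bounded_closed_interval)
    show "range (\<lambda>n. (xi n, eta n)) \<subseteq> {-1..1} \<times> {-E..E}"
    proof (rule subsetI)
      fix p assume "p \<in> range (\<lambda>n. (xi n, eta n))"
      then obtain n where p: "p = (xi n, eta n)" by auto
      have "\<bar>xi n\<bar> \<le> 1" using axi[of n] by simp
      then have h1: "xi n \<in> {-1..1}" by (simp add: abs_le_iff)
      have "\<bar>eta n\<bar> \<le> E" using etab(1)[of n] .
      then have h2: "eta n \<in> {-E..E}" by (simp add: abs_le_iff)
      show "p \<in> {-1..1} \<times> {-E..E}" using h1 h2 p by simp
    qed
  qed
  obtain l r2 where r2: "strict_mono r2" and lim: "((\<lambda>n. (xi n, eta n)) \<circ> r2) \<longlonglongrightarrow> l"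
    using bounded_imp_convergent_subsequence[OF bnd] by blast
  have cxi: "(\<lambda>n. xi (r2 n)) \<longlonglongrightarrow> fst l" using tendsto_fst[OF lim] by (simp add: o_def)
  have ceta: "(\<lambda>n. eta (r2 n)) \<longlonglongrightarrow> snd l" using tendsto_snd[OF lim] by (simp add: o_def)
  have "(\<lambda>n. \<bar>xi (r2 n)\<bar>) \<longlonglongrightarrow> \<bar>fst l\<bar>" by (rule tendsto_rabs[OF cxi])
  then have "\<bar>fst l\<bar> = 1" using axi by (simp add: LIMSEQ_const_iff)
  then have fl: "fst l \<noteq> 0" by auto
  have "(\<lambda>n. \<bar>eta (r2 n)\<bar>) \<longlonglongrightarrow> \<bar>snd l\<bar>" by (rule tendsto_rabs[OF ceta])
  then have "exp (- C / real a1) \<le> \<bar>snd l\<bar>"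
    by (rule LIMSEQ_le_const) (use etab(2) in auto)
  then have sl: "snd l \<noteq> 0" by (metis abs_zero exp_gt_zero not_le)
  have lam0: "lam \<longlonglongrightarrow> 0"
  proof -
    have "filterlim (\<lambda>n. (1 / real a1) * s n) at_top sequentially"
      using a1 by (intro filterlim_tendsto_pos_mult_at_top[OF tendsto_const _ sinf]) auto
    then have h: "filterlim (\<lambda>n. - ((1 / real a1) * s n)) at_bot sequentially"
      by (rule filterlim_uminus_at_top[THEN iffD1])
    have "(\<lambda>n. - ((1 / real a1) * s n)) = (\<lambda>n. - s n / real a1)" by (rule ext) simp
    then have "filterlim (\<lambda>n. - s n / real a1) at_bot sequentially" using h by simp
    then show ?thesis unfolding lam_def[abs_def] by (rule filterlim_compose[OF exp_at_bot])
  qed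
  show False
  proof (rule edge_case[OF fin ne nonneg hC refl a1 a2 cop])
    show "\<And>n. (lam \<circ> r2) n > 0" using lampos by simp
    show "(lam \<circ> r2) \<longlonglongrightarrow> 0" by (rule LIMSEQ_subseq_LIMSEQ[OF lam0 r2])
    show "(\<lambda>n. xi (r2 n)) \<longlonglongrightarrow> fst l" by (rule cxi)
    show "(\<lambda>n. eta (r2 n)) \<longlonglongrightarrow> snd l" by (rule ceta)
    show "fst l \<noteq> 0" "snd l \<noteq> 0" using fl sl by auto
    show "\<And>n. peval c (xi (r2 n) * (lam \<circ> r2) n ^ a1) (eta (r2 n) * (lam \<circ> r2) n ^ a2) < 0"
      using neg by (simp add: xi_eq eta_eq)
  qed
qed

lemma weight_rel:
  fixes om :: real
  assumes "om * real (a1 + a2) = real a1" "a1 + a2 > 0"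
  shows "om * real (fst k) + (1 - om) * real (snd k) = real (wdeg (a1, a2) k) / real (a1 + a2)"
proof -
  have p: "real (a1 + a2) > 0" using assms(2) by (metis of_nat_0_less_iff)
  have "(1 - om) * real (a1 + a2) = real a2" using assms(1) by (simp add: algebra_simps)
  moreover have "(om * real (fst k) + (1 - om) * real (snd k)) * real (a1 + a2)
     = real (fst k) * (om * real (a1 + a2)) + real (snd k) * ((1 - om) * real (a1 + a2))"
    by (simp only: algebra_simps)
  ultimately have "(om * real (fst k) + (1 - om) * real (snd k)) * real (a1 + a2) = real (wdeg (a1, a2) k)"
    using assms(1) by (simp add: wdeg_def algebra_simps)
  then show ?thesis using p by (simp add: field_simps)
qed

lemma lin_id1:
  fixes a1 a2 d1 d2 s t :: real
  assumes "a1 * d1 = - (a2 * d2)"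
  shows "a1 * (d1 * s + d2 * t) = d2 * (a1 * t - a2 * s)"
proof -
  have "a1 * (d1 * s + d2 * t) = (a1 * d1) * s + a1 * d2 * t" by (simp add: algebra_simps)
  also have "\<dots> = - (a2 * d2) * s + a1 * d2 * t" using assms by simp
  also have "\<dots> = d2 * (a1 * t - a2 * s)" by (simp add: algebra_simps)
  finally show ?thesis .
qed

lemma lin_id2:
  fixes a1 a2 d1 d2 s t :: real
  assumes "a2 * d2 = - (a1 * d1)"
  shows "a2 * (d1 * s + d2 * t) = d1 * (a2 * s - a1 * t)"
proof -
  have "a2 * (d1 * s + d2 * t) = a2 * d1 * s + (a2 * d2) * t" by (simp add: algebra_simps)
  also have "\<dots> = a2 * d1 * s - (a1 * d1) * t" using assms by simp
  also have "\<dots> = d1 * (a2 * s - a1 * t)" by (simp add: algebra_simps)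
  finally show ?thesis .
qed

lemma vertex_plus:
  fixes c :: "nat \<times> nat \<Rightarrow> real"
  assumes fin: "finite (supp2 c)" and ne: "supp2 c \<noteq> {}"
    and nonneg: "\<forall>A. fst A \<ge> 1 \<and> snd A \<ge> 1 \<longrightarrow> (\<forall>x y. peval (main_form c A) x y \<ge> 0)"
    and nz: "\<And>n. x n \<noteq> 0" "\<And>n. y n \<noteq> 0"
    and neg: "\<And>n. peval c (x n) (y n) < 0"
    and sx: "\<And>n. \<bar>x n\<bar> = exp (- s n)" and ty: "\<And>n. \<bar>y n\<bar> = exp (- t n)"
    and sinf: "filterlim s at_top sequentially" and tinf: "filterlim t at_top sequentially"
    and spos: "\<And>n. s n > 0" and tpos: "\<And>n. t n > 0"
    and omc: "(\<lambda>n. s n / (s n + t n)) \<longlonglongrightarrow> om"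
    and omA: "om * real (a1 + a2) = real a1" and apos: "a1 + a2 > 0"
    and Dpos: "\<And>n. real a1 * t n - real a2 * s n > 0"
    and Dinf: "filterlim (\<lambda>n. real a1 * t n - real a2 * s n) at_top sequentially"
  shows False
proof -
  define S where "S = supp2 c"
  define w where "w = wdeg (a1, a2)"
  have a1: "a1 \<ge> 1"
  proof (rule ccontr)
    assume "\<not> a1 \<ge> 1"
    then have "a1 = 0" by simp
    then show False using Dpos[of 0] spos[of 0] by (simp add: mult_nonneg_nonneg) (smt (verit) of_nat_0_le_iff mult_nonneg_nonneg)
  qed
  have Wrel: "om * real (fst k) + (1 - om) * real (snd k) = real (w k) / real (a1 + a2)" for k
    unfolding w_def by (rule weight_rel[OF omA apos])
  have fS: "finite S" using fin by (simp add: S_def)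
  define m0 where "m0 = Min (w ` S)"
  have m0le: "k \<in> S \<Longrightarrow> m0 \<le> w k" for k unfolding m0_def using fS by simp
  have "m0 \<in> w ` S" unfolding m0_def using fS ne by (intro Min_in) (auto simp: S_def)
  define F where "F = {k\<in>S. w k = m0}"
  have neF: "F \<noteq> {}" using \<open>m0 \<in> w ` S\<close> by (auto simp: F_def)
  have fF: "finite F" using fS by (simp add: F_def)
  define m2 where "m2 = Min (snd ` F)"
  have "m2 \<in> snd ` F" unfolding m2_def using fF neF by (intro Min_in) auto
  then obtain ks where ksF: "ks \<in> F" and ks2: "snd ks = m2" by auto
  have ksS: "ks \<in> S" using ksF by (simp add: F_def)
  have m2le: "k \<in> F \<Longrightarrow> m2 \<le> snd k" for k unfolding m2_def using fF by simp
  have wks: "w ks = m0" using ksF by (simp add: F_def)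
  have Fsnd: "snd ks < snd k" if k: "k \<in> F" "k \<noteq> ks" for k
  proof (rule ccontr)
    assume "\<not> snd ks < snd k"
    then have e2: "snd k = snd ks" using m2le[OF k(1)] ks2 by simp
    have "w k = w ks" using k(1) wks by (simp add: F_def)
    then have "a1 * fst k = a1 * fst ks" using e2 by (simp add: w_def wdeg_def)
    then have "fst k = fst ks" using a1 by simp
    then show False using e2 k(2) by (simp add: prod_eq_iff)
  qed
  have lim: "filterlim (\<lambda>n. (real (fst k) - real (fst ks)) * s n + (real (snd k) - real (snd ks)) * t n) at_top sequentially"
    if k: "k \<in> supp2 c" "k \<noteq> ks" for k
  proof (cases "w k = m0")
    case False
    then have "w ks < w k" using m0le[of k] k wks by (simp add: S_def)
    moreover have pa: "real (a1 + a2) > 0" using apos by (metis of_nat_0_less_iff)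
    ultimately have "real (w ks) / real (a1 + a2) < real (w k) / real (a1 + a2)"
      by (intro divide_strict_right_mono) simp_all
    then have "om * real (fst ks) + (1 - om) * real (snd ks) < om * real (fst k) + (1 - om) * real (snd k)"
      unfolding Wrel .
    then have "om * (real (fst k) - real (fst ks)) + (1 - om) * (real (snd k) - real (snd ks)) > 0"
      by (simp add: algebra_simps)
    then show ?thesis by (rule lim_weight[OF sinf tinf spos tpos omc])
  next
    case True
    then have kF: "k \<in> F" using k by (simp add: F_def S_def)
    have gt: "snd ks < snd k" by (rule Fsnd[OF kF k(2)])
    have "w k = w ks" using True wks by simp
    then have e: "real a1 * real (fst k) + real a2 * real (snd k) = real a1 * real (fst ks) + real a2 * real (snd ks)"
      by (simp add: w_def wdeg_def) (metis of_nat_add of_nat_mult)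
    have eq: "(real (fst k) - real (fst ks)) * s n + (real (snd k) - real (snd ks)) * t n
        = ((real (snd k) - real (snd ks)) / real a1) * (real a1 * t n - real a2 * s n)" for n
    proof -
      have "real a1 * (real (fst k) - real (fst ks)) = - (real a2 * (real (snd k) - real (snd ks)))"
        using e by (simp add: algebra_simps)
      then have "real a1 * ((real (fst k) - real (fst ks)) * s n + (real (snd k) - real (snd ks)) * t n)
          = (real (snd k) - real (snd ks)) * (real a1 * t n - real a2 * s n)"
        by (rule lin_id1)
      then show ?thesis using a1 by (simp add: field_simps)
    qed
    have "filterlim (\<lambda>n. ((real (snd k) - real (snd ks)) / real a1) * (real a1 * t n - real a2 * s n)) at_top sequentially"
      by (rule filterlim_tendsto_pos_mult_at_top[OF tendsto_const _ Dinf]) (use gt a1 in simp)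
    then show ?thesis by (simp only: eq)
  qed
  define N where "N = snd ks + 1"
  define A' where "A' = (N * a1, N * a2 + 1)"
  have wA': "wdeg A' k = N * w k + snd k" for k by (simp add: A'_def w_def wdeg_def algebra_simps)
  have uniq: "\<forall>k\<in>supp2 c. k \<noteq> ks \<longrightarrow> wdeg A' ks < wdeg A' k"
  proof (intro ballI impI)
    fix k assume k: "k \<in> supp2 c" "k \<noteq> ks"
    show "wdeg A' ks < wdeg A' k"
    proof (cases "w k = m0")
      case True
      then have "k \<in> F" using k by (simp add: F_def S_def)
      then show ?thesis using Fsnd[OF _ k(2)] True wks by (simp add: wA')
    next
      case False
      then have "w ks < w k" using m0le[of k] k wks by (simp add: S_def)
      then have "N * w ks + N \<le> N * w k" by (metis Suc_le_eq add.commute mult_Suc_right mult_le_mono2)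
      then show ?thesis by (simp add: wA' N_def)
    qed
  qed
  show False
    by (rule vfinish[OF fin nonneg ksS[unfolded S_def] _ _ uniq nz neg sx ty lim]) (use a1 in \<open>auto simp: A'_def N_def\<close>)
qed

lemma vertex_minus:
  fixes c :: "nat \<times> nat \<Rightarrow> real"
  assumes fin: "finite (supp2 c)" and ne: "supp2 c \<noteq> {}"
    and nonneg: "\<forall>A. fst A \<ge> 1 \<and> snd A \<ge> 1 \<longrightarrow> (\<forall>x y. peval (main_form c A) x y \<ge> 0)"
    and nz: "\<And>n. x n \<noteq> 0" "\<And>n. y n \<noteq> 0"
    and neg: "\<And>n. peval c (x n) (y n) < 0"
    and sx: "\<And>n. \<bar>x n\<bar> = exp (- s n)" and ty: "\<And>n. \<bar>y n\<bar> = exp (- t n)"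
    and sinf: "filterlim s at_top sequentially" and tinf: "filterlim t at_top sequentially"
    and spos: "\<And>n. s n > 0" and tpos: "\<And>n. t n > 0"
    and omc: "(\<lambda>n. s n / (s n + t n)) \<longlonglongrightarrow> om"
    and omA: "om * real (a1 + a2) = real a1" and apos: "a1 + a2 > 0"
    and Dpos: "\<And>n. real a2 * s n - real a1 * t n > 0"
    and Dinf: "filterlim (\<lambda>n. real a2 * s n - real a1 * t n) at_top sequentially"
  shows False
proof -
  define S where "S = supp2 c"
  define w where "w = wdeg (a1, a2)"
  have a2: "a2 \<ge> 1"
  proof (rule ccontr)
    assume "\<not> a2 \<ge> 1"
    then have "a2 = 0" by simp
    then show False using Dpos[of 0] tpos[of 0] by (simp add: mult_nonneg_nonneg) (smt (verit) of_nat_0_le_iff mult_nonneg_nonneg)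
  qed
  have Wrel: "om * real (fst k) + (1 - om) * real (snd k) = real (w k) / real (a1 + a2)" for k
    unfolding w_def by (rule weight_rel[OF omA apos])
  have fS: "finite S" using fin by (simp add: S_def)
  define m0 where "m0 = Min (w ` S)"
  have m0le: "k \<in> S \<Longrightarrow> m0 \<le> w k" for k unfolding m0_def using fS by simp
  have "m0 \<in> w ` S" unfolding m0_def using fS ne by (intro Min_in) (auto simp: S_def)
  define F where "F = {k\<in>S. w k = m0}"
  have neF: "F \<noteq> {}" using \<open>m0 \<in> w ` S\<close> by (auto simp: F_def)
  have fF: "finite F" using fS by (simp add: F_def)
  define m2 where "m2 = Min (fst ` F)"
  have "m2 \<in> fst ` F" unfolding m2_def using fF neF by (intro Min_in) auto
  then obtain ks where ksF: "ks \<in> F" and ks2: "fst ks = m2" by auto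
  have ksS: "ks \<in> S" using ksF by (simp add: F_def)
  have m2le: "k \<in> F \<Longrightarrow> m2 \<le> fst k" for k unfolding m2_def using fF by simp
  have wks: "w ks = m0" using ksF by (simp add: F_def)
  have Ffst: "fst ks < fst k" if k: "k \<in> F" "k \<noteq> ks" for k
  proof (rule ccontr)
    assume "\<not> fst ks < fst k"
    then have e2: "fst k = fst ks" using m2le[OF k(1)] ks2 by simp
    have "w k = w ks" using k(1) wks by (simp add: F_def)
    then have "a2 * snd k = a2 * snd ks" using e2 by (simp add: w_def wdeg_def)
    then have "snd k = snd ks" using a2 by simp
    then show False using e2 k(2) by (simp add: prod_eq_iff)
  qed
  have lim: "filterlim (\<lambda>n. (real (fst k) - real (fst ks)) * s n + (real (snd k) - real (snd ks)) * t n) at_top sequentially"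
    if k: "k \<in> supp2 c" "k \<noteq> ks" for k
  proof (cases "w k = m0")
    case False
    then have "w ks < w k" using m0le[of k] k wks by (simp add: S_def)
    moreover have pa: "real (a1 + a2) > 0" using apos by (metis of_nat_0_less_iff)
    ultimately have "real (w ks) / real (a1 + a2) < real (w k) / real (a1 + a2)"
      by (intro divide_strict_right_mono) simp_all
    then have "om * real (fst ks) + (1 - om) * real (snd ks) < om * real (fst k) + (1 - om) * real (snd k)"
      unfolding Wrel .
    then have "om * (real (fst k) - real (fst ks)) + (1 - om) * (real (snd k) - real (snd ks)) > 0"
      by (simp add: algebra_simps)
    then show ?thesis by (rule lim_weight[OF sinf tinf spos tpos omc])
  next
    case True
    then have kF: "k \<in> F" using k by (simp add: F_def S_def)
    have gt: "fst ks < fst k" by (rule Ffst[OF kF k(2)])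
    have "w k = w ks" using True wks by simp
    then have e: "real a1 * real (fst k) + real a2 * real (snd k) = real a1 * real (fst ks) + real a2 * real (snd ks)"
      by (simp add: w_def wdeg_def) (metis of_nat_add of_nat_mult)
    have eq: "(real (fst k) - real (fst ks)) * s n + (real (snd k) - real (snd ks)) * t n
        = ((real (fst k) - real (fst ks)) / real a2) * (real a2 * s n - real a1 * t n)" for n
    proof -
      have "real a2 * (real (snd k) - real (snd ks)) = - (real a1 * (real (fst k) - real (fst ks)))"
        using e by (simp add: algebra_simps)
      then have "real a2 * ((real (fst k) - real (fst ks)) * s n + (real (snd k) - real (snd ks)) * t n)
          = (real (fst k) - real (fst ks)) * (real a2 * s n - real a1 * t n)"
        by (rule lin_id2)
      then show ?thesis using a2 by (simp add: field_simps)
    qed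
    have "filterlim (\<lambda>n. ((real (fst k) - real (fst ks)) / real a2) * (real a2 * s n - real a1 * t n)) at_top sequentially"
      by (rule filterlim_tendsto_pos_mult_at_top[OF tendsto_const _ Dinf]) (use gt a2 in simp)
    then show ?thesis by (simp only: eq)
  qed
  define N where "N = fst ks + 1"
  define A' where "A' = (N * a1 + 1, N * a2)"
  have wA': "wdeg A' k = N * w k + fst k" for k by (simp add: A'_def w_def wdeg_def algebra_simps)
  have uniq: "\<forall>k\<in>supp2 c. k \<noteq> ks \<longrightarrow> wdeg A' ks < wdeg A' k"
  proof (intro ballI impI)
    fix k assume k: "k \<in> supp2 c" "k \<noteq> ks"
    show "wdeg A' ks < wdeg A' k"
    proof (cases "w k = m0")
      case True
      then have "k \<in> F" using k by (simp add: F_def S_def)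
      then show ?thesis using Ffst[OF _ k(2)] True wks by (simp add: wA')
    next
      case False
      then have "w ks < w k" using m0le[of k] k wks by (simp add: S_def)
      then have "N * w ks + N \<le> N * w k" by (metis Suc_le_eq add.commute mult_Suc_right mult_le_mono2)
      then show ?thesis by (simp add: wA' N_def)
    qed
  qed
  show False
    by (rule vfinish[OF fin nonneg ksS[unfolded S_def] _ _ uniq nz neg sx ty lim]) (use a2 in \<open>auto simp: A'_def N_def\<close>)
qed

lemma core2:
  fixes c :: "nat \<times> nat \<Rightarrow> real"
  assumes fin: "finite (supp2 c)" and ne: "supp2 c \<noteq> {}"
    and nonneg: "\<forall>A. fst A \<ge> 1 \<and> snd A \<ge> 1 \<longrightarrow> (\<forall>x y. peval (main_form c A) x y \<ge> 0)"
    and hC: "\<forall>A\<in>calA c. C2 c A \<or> C2tilde c A"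
    and nz: "\<And>n. x n \<noteq> 0" "\<And>n. y n \<noteq> 0"
    and neg: "\<And>n. peval c (x n) (y n) < 0"
    and sx: "\<And>n. \<bar>x n\<bar> = exp (- s n)" and ty: "\<And>n. \<bar>y n\<bar> = exp (- t n)"
    and sinf: "filterlim s at_top sequentially" and tinf: "filterlim t at_top sequentially"
    and spos: "\<And>n. s n > 0" and tpos: "\<And>n. t n > 0"
    and omc: "(\<lambda>n. s n / (s n + t n)) \<longlonglongrightarrow> om" and om: "0 \<le> om" "om \<le> 1"
  shows False
proof -
  define S where "S = supp2 c"
  define W where "W k = om * real (fst k) + (1 - om) * real (snd k)" for k :: "nat \<times> nat"
  have fS: "finite S" using fin by (simp add: S_def)
  obtain k0 where k0: "k0 \<in> S" "\<And>k. k \<in> S \<Longrightarrow> W k0 \<le> W k"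
  proof -
    have "Min (W ` S) \<in> W ` S" using fS ne by (intro Min_in) (auto simp: S_def)
    then obtain k0 where "k0 \<in> S" "W k0 = Min (W ` S)" by auto
    moreover have "\<And>k. k \<in> S \<Longrightarrow> Min (W ` S) \<le> W k" using fS by simp
    ultimately show ?thesis using that by auto
  qed
  show False
  proof (cases "\<forall>k\<in>S. k \<noteq> k0 \<longrightarrow> W k0 < W k")
    case True
    obtain A' where A': "fst A' \<ge> 1" "snd A' \<ge> 1" "\<forall>k\<in>S. k \<noteq> k0 \<longrightarrow> wdeg A' k0 < wdeg A' k"
      using approx_expose[OF fS om k0(1)] True by (auto simp: W_def)
    show False
    proof (rule vfinish[OF fin nonneg k0(1)[unfolded S_def] A'(1,2) A'(3)[unfolded S_def] nz neg sx ty])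
      fix k assume k: "k \<in> supp2 c" "k \<noteq> k0"
      then have "W k0 < W k" using True by (simp add: S_def)
      then have "om * (real (fst k) - real (fst k0)) + (1 - om) * (real (snd k) - real (snd k0)) > 0"
        by (simp add: W_def algebra_simps)
      then show "filterlim (\<lambda>n. (real (fst k) - real (fst k0)) * s n + (real (snd k) - real (snd k0)) * t n) at_top sequentially"
        by (rule lim_weight[OF sinf tinf spos tpos omc])
    qed
  next
    case False
    then obtain kk where kk: "kk \<in> S" "kk \<noteq> k0" "\<not> W k0 < W kk" by auto
    then have Weq: "W kk = W k0" using k0(2)[OF kk(1)] by simp
    define d1 where "d1 = int (fst kk) - int (fst k0)"
    define d2 where "d2 = int (snd kk) - int (snd k0)"
    have dnz: "d1 \<noteq> 0 \<or> d2 \<noteq> 0" using kk(2) by (auto simp: d1_def d2_def prod_eq_iff)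
    have deq: "om * real_of_int d1 + (1 - om) * real_of_int d2 = 0"
      using Weq by (simp add: W_def d1_def d2_def algebra_simps)
    obtain a1 a2 :: nat where cop: "coprime a1 a2" and apos: "a1 + a2 > 0" and omA: "om * real (a1 + a2) = real a1"
      using rational_dir[OF om dnz deq] by blast
    define D where "D n = real a1 * t n - real a2 * s n" for n
    show False
    proof (cases "\<exists>C. frequently (\<lambda>n. \<bar>D n\<bar> \<le> C) sequentially")
      case True
      then obtain C where "frequently (\<lambda>n. \<bar>D n\<bar> \<le> C) sequentially" by blast
      then obtain r :: "nat \<Rightarrow> nat" where r: "strict_mono r" "\<And>n. \<bar>D (r n)\<bar> \<le> C"
        using freq_subseq by blast
      show False
      proof (rule edge_branch[OF fin ne nonneg hC, of "\<lambda>n. x (r n)" "\<lambda>n. y (r n)" "\<lambda>n. s (r n)" "\<lambda>n. t (r n)" a1 a2 C])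
        show "filterlim (\<lambda>n. s (r n)) at_top sequentially" by (rule filterlim_subseq_comp[OF sinf r(1)])
        show "filterlim (\<lambda>n. t (r n)) at_top sequentially" by (rule filterlim_subseq_comp[OF tinf r(1)])
      qed (use nz neg sx ty cop apos r(2) in \<open>auto simp: D_def\<close>)
    next
      case False
      then have evD: "eventually (\<lambda>n. \<bar>D n\<bar> > C) sequentially" for C
        by (auto simp: not_frequently not_le)
      have omc': "(\<lambda>n. s (r n) / (s (r n) + t (r n))) \<longlonglongrightarrow> om" if "strict_mono r" for r :: "nat \<Rightarrow> nat"
        using LIMSEQ_subseq_LIMSEQ[OF omc that] by (simp add: o_def)
      show False
      proof (cases "frequently (\<lambda>n. D n > 0) sequentially")
        case True
        then obtain r :: "nat \<Rightarrow> nat" where r: "strict_mono r" "\<And>n. D (r n) > 0"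
          using freq_subseq by blast
        have Dinf: "filterlim (\<lambda>n. D (r n)) at_top sequentially"
          unfolding filterlim_at_top_dense
        proof
          fix Z :: real
          have "eventually (\<lambda>n. \<bar>D (r n)\<bar> > \<bar>Z\<bar>) sequentially" by (rule ev_subseq[OF evD r(1)])
          then show "eventually (\<lambda>n. Z < D (r n)) sequentially"
            by (rule eventually_mono) (use r(2) in \<open>smt (verit)\<close>)
        qed
        show False
          by (rule vertex_plus[OF fin ne nonneg, of "\<lambda>n. x (r n)" "\<lambda>n. y (r n)" "\<lambda>n. s (r n)" "\<lambda>n. t (r n)" om a1 a2,
              OF _ _ _ _ _ filterlim_subseq_comp[OF sinf r(1)] filterlim_subseq_comp[OF tinf r(1)] _ _ omc'[OF r(1)] omA apos])
            (use nz neg sx ty spos tpos r(2) Dinf in \<open>auto simp: D_def\<close>)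
      next
        case False
        then have "eventually (\<lambda>n. D n \<le> 0) sequentially" by (simp add: not_frequently not_less)
        then have "eventually (\<lambda>n. D n < 0) sequentially"
          using evD[of 0] by eventually_elim auto
        then have "frequently (\<lambda>n. D n < 0) sequentially" by (simp add: eventually_frequently)
        then obtain r :: "nat \<Rightarrow> nat" where r: "strict_mono r" "\<And>n. D (r n) < 0"
          using freq_subseq by blast
        have Dinf: "filterlim (\<lambda>n. real a2 * s (r n) - real a1 * t (r n)) at_top sequentially"
          unfolding filterlim_at_top_dense
        proof
          fix Z :: real
          have "eventually (\<lambda>n. \<bar>D (r n)\<bar> > \<bar>Z\<bar>) sequentially" by (rule ev_subseq[OF evD r(1)])
          then show "eventually (\<lambda>n. Z < real a2 * s (r n) - real a1 * t (r n)) sequentially"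
          proof (rule eventually_mono)
            fix n assume h: "\<bar>D (r n)\<bar> > \<bar>Z\<bar>"
            have "D (r n) < 0" using r(2) .
            then show "Z < real a2 * s (r n) - real a1 * t (r n)" using h by (simp add: D_def)
          qed
        qed
        show False
          by (rule vertex_minus[OF fin ne nonneg, of "\<lambda>n. x (r n)" "\<lambda>n. y (r n)" "\<lambda>n. s (r n)" "\<lambda>n. t (r n)" om a1 a2,
              OF _ _ _ _ _ filterlim_subseq_comp[OF sinf r(1)] filterlim_subseq_comp[OF tinf r(1)] _ _ omc'[OF r(1)] omA apos])
            (use nz neg sx ty spos tpos r(2) Dinf in \<open>auto simp: D_def\<close>)
      qed
    qed
  qed
qed

lemma log_to_inf:
  fixes x :: "nat \<Rightarrow> real"
  assumes x0: "x \<longlonglongrightarrow> 0" and nz: "\<And>n. x n \<noteq> 0"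
  shows "filterlim (\<lambda>n. - ln \<bar>x n\<bar>) at_top sequentially"
proof -
  have "filterlim (\<lambda>n. \<bar>x n\<bar>) (at_right 0) sequentially"
    unfolding filterlim_at using tendsto_rabs_zero[OF x0] nz by auto
  then have "filterlim (\<lambda>n. ln \<bar>x n\<bar>) at_bot sequentially"
    by (rule filterlim_compose[OF ln_at_0])
  then show ?thesis by (simp add: filterlim_uminus_at_bot)
qed

lemma core_offaxis:
  fixes c :: "nat \<times> nat \<Rightarrow> real"
  assumes fin: "finite (supp2 c)" and ne: "supp2 c \<noteq> {}"
    and nonneg: "\<forall>A. fst A \<ge> 1 \<and> snd A \<ge> 1 \<longrightarrow> (\<forall>x y. peval (main_form c A) x y \<ge> 0)"
    and hC: "\<forall>A\<in>calA c. C2 c A \<or> C2tilde c A"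
    and x0: "x \<longlonglongrightarrow> 0" and y0: "y \<longlonglongrightarrow> 0"
    and nz: "\<And>n. x n \<noteq> 0" "\<And>n. y n \<noteq> 0"
    and small: "\<And>n. \<bar>x n\<bar> < 1" "\<And>n. \<bar>y n\<bar> < 1"
    and neg: "\<And>n. peval c (x n) (y n) < 0"
  shows False
proof -
  define s where "s n = - ln \<bar>x n\<bar>" for n
  define t where "t n = - ln \<bar>y n\<bar>" for n
  have sx: "\<bar>x n\<bar> = exp (- s n)" for n using nz(1)[of n] by (simp add: s_def)
  have ty: "\<bar>y n\<bar> = exp (- t n)" for n using nz(2)[of n] by (simp add: t_def)
  have spos: "s n > 0" for n using nz(1)[of n] small(1)[of n] by (simp add: s_def ln_less_zero)
  have tpos: "t n > 0" for n using nz(2)[of n] small(2)[of n] by (simp add: t_def ln_less_zero)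
  have sinf: "filterlim s at_top sequentially" unfolding s_def[abs_def] by (rule log_to_inf[OF x0 nz(1)])
  have tinf: "filterlim t at_top sequentially" unfolding t_def[abs_def] by (rule log_to_inf[OF y0 nz(2)])
  define q where "q n = s n / (s n + t n)" for n
  have q01: "0 \<le> q n \<and> q n \<le> 1" for n
    using spos[of n] tpos[of n] by (simp add: q_def divide_le_eq_1)
  have "bounded (range q)"
    by (rule bounded_subset[of "{0..1}"]) (use q01 in auto)
  then obtain om r where r: "strict_mono r" and qc: "(q \<circ> r) \<longlonglongrightarrow> om"
    using bounded_imp_convergent_subsequence by blast
  have om0: "0 \<le> om" by (rule LIMSEQ_le_const[OF qc]) (use q01 in auto)
  have om1: "om \<le> 1" by (rule LIMSEQ_le_const2[OF qc]) (use q01 in auto)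
  show False
  proof (rule core2[OF fin ne nonneg hC, of "\<lambda>n. x (r n)" "\<lambda>n. y (r n)" "\<lambda>n. s (r n)" "\<lambda>n. t (r n)" om])
    show "filterlim (\<lambda>n. s (r n)) at_top sequentially" by (rule filterlim_subseq_comp[OF sinf r])
    show "filterlim (\<lambda>n. t (r n)) at_top sequentially" by (rule filterlim_subseq_comp[OF tinf r])
    show "(\<lambda>n. s (r n) / (s (r n) + t (r n))) \<longlonglongrightarrow> om" using qc by (simp add: o_def q_def)
  qed (use nz neg sx ty spos tpos om0 om1 in auto)
qed

theorem theorem4:
  fixes c :: "nat \<times> nat \<Rightarrow> real"
  assumes "is_bipoly c"
    and "peval c 0 0 = 0"
    and "((\<lambda>z. peval c (fst z) (snd z)) has_derivative (\<lambda>_. 0)) (at (0, 0))"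
    and "aff_dim (convex hull (supp_real c)) = 2"
    and "\<forall>A. fst A \<ge> 1 \<and> snd A \<ge> 1 \<longrightarrow> (\<forall>x y. peval (main_form c A) x y \<ge> 0)"
    and "calA c \<noteq> {}"
    and "\<forall>A\<in>calA c. C2 c A \<or> C2tilde c A"
  shows "\<forall>\<^sub>F z in nhds (0, 0). peval c (fst z) (snd z) \<ge> peval c 0 0"
proof -
  note p00 = assms(2) and nonneg = assms(5) and hC = assms(7)
  have fin: "finite (supp2 c)" using assms(1) by (simp add: is_bipoly_def supp2_def)
  show ?thesis
  proof (cases "supp2 c = {}")
    case True
    then have "peval c a b = 0" for a b by (simp add: peval_def)
    then show ?thesis by simp
  next
    case ne: False
    show ?thesis
      unfolding eventually_nhds_iff_sequentially
    proof (intro allI impI)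
      fix f :: "nat \<Rightarrow> real \<times> real"
      assume f0: "f \<longlonglongrightarrow> (0, 0)"
      define x where "x n = fst (f n)" for n
      define y where "y n = snd (f n)" for n
      have x0: "x \<longlonglongrightarrow> 0" using tendsto_fst[OF f0] by (simp add: x_def[abs_def])
      have y0: "y \<longlonglongrightarrow> 0" using tendsto_snd[OF f0] by (simp add: y_def[abs_def])
      show "eventually (\<lambda>n. peval c (fst (f n)) (snd (f n)) \<ge> peval c 0 0) sequentially"
      proof (rule ccontr)
        assume "\<not> ?thesis"
        then have fr: "frequently (\<lambda>n. peval c (x n) (y n) < 0) sequentially"
          by (simp add: not_eventually not_le p00 x_def y_def)
        show False
        proof (cases "frequently (\<lambda>n. peval c (x n) (y n) < 0 \<and> x n = 0) sequentially")
          case True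
          then obtain r :: "nat \<Rightarrow> nat" where r: "strict_mono r" "\<And>n. peval c (x (r n)) (y (r n)) < 0 \<and> x (r n) = 0"
            using freq_subseq by blast
          show False
          proof (rule axis_x[OF fin nonneg p00, of "\<lambda>n. y (r n)"])
            show "(\<lambda>n. y (r n)) \<longlonglongrightarrow> 0" using LIMSEQ_subseq_LIMSEQ[OF y0 r(1)] by (simp add: o_def)
            show "\<And>n. peval c 0 (y (r n)) < 0" using r(2) by metis
          qed
        next
          case nx: False
          show False
          proof (cases "frequently (\<lambda>n. peval c (x n) (y n) < 0 \<and> y n = 0) sequentially")
            case True
            then obtain r :: "nat \<Rightarrow> nat" where r: "strict_mono r" "\<And>n. peval c (x (r n)) (y (r n)) < 0 \<and> y (r n) = 0"
              using freq_subseq by blast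
            show False
            proof (rule axis_y[OF fin nonneg p00, of "\<lambda>n. x (r n)"])
              show "(\<lambda>n. x (r n)) \<longlonglongrightarrow> 0" using LIMSEQ_subseq_LIMSEQ[OF x0 r(1)] by (simp add: o_def)
              show "\<And>n. peval c (x (r n)) 0 < 0" using r(2) by metis
            qed
          next
            case ny: False
            have e1: "eventually (\<lambda>n. \<not> (peval c (x n) (y n) < 0 \<and> x n = 0)) sequentially"
              using nx by (simp add: not_frequently)
            have e2: "eventually (\<lambda>n. \<not> (peval c (x n) (y n) < 0 \<and> y n = 0)) sequentially"
              using ny by (simp add: not_frequently)
            have e3: "eventually (\<lambda>n. \<bar>x n\<bar> < 1) sequentially"
              using tendsto_rabs_zero[OF x0] by (rule order_tendstoD) simp
            have e4: "eventually (\<lambda>n. \<bar>y n\<bar> < 1) sequentially"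
              using tendsto_rabs_zero[OF y0] by (rule order_tendstoD) simp
            have "eventually (\<lambda>n. (\<not> (peval c (x n) (y n) < 0 \<and> x n = 0)) \<and> (\<not> (peval c (x n) (y n) < 0 \<and> y n = 0))
                \<and> \<bar>x n\<bar> < 1 \<and> \<bar>y n\<bar> < 1) sequentially"
              using e1 e2 e3 e4 by eventually_elim auto
            from frequently_eventually_frequently[OF fr this]
            have "frequently (\<lambda>n. peval c (x n) (y n) < 0 \<and> x n \<noteq> 0 \<and> y n \<noteq> 0 \<and> \<bar>x n\<bar> < 1 \<and> \<bar>y n\<bar> < 1) sequentially"
              by (rule frequently_elim1) auto
            then obtain r :: "nat \<Rightarrow> nat" where r: "strict_mono r"
              "\<And>n. peval c (x (r n)) (y (r n)) < 0 \<and> x (r n) \<noteq> 0 \<and> y (r n) \<noteq> 0 \<and> \<bar>x (r n)\<bar> < 1 \<and> \<bar>y (r n)\<bar> < 1"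
              using freq_subseq by blast
            show False
            proof (rule core_offaxis[OF fin ne nonneg hC, of "\<lambda>n. x (r n)" "\<lambda>n. y (r n)"])
              show "(\<lambda>n. x (r n)) \<longlonglongrightarrow> 0" using LIMSEQ_subseq_LIMSEQ[OF x0 r(1)] by (simp add: o_def)
              show "(\<lambda>n. y (r n)) \<longlonglongrightarrow> 0" using LIMSEQ_subseq_LIMSEQ[OF y0 r(1)] by (simp add: o_def)
            qed (use r(2) in auto)
          qed
        qed
      qed
    qed
  qed
qed

end
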